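(* For any integer $k \geq 1$ and any real number $M > 0$, there exist infinitely many square-free integers $d > 0$ such that $h(jd) > M$ for all $j = 1, \ldots, k$.
   Context: For an integer $m$ which is not a perfect square, $h(m)$ denotes the class number of the quadratic field $\mathbb{Q}(\sqrt{m})$. *)

theory Defs
  imports "HOL-Computational_Algebra.Computational_Algebra"
begin

definition quad_field :: "int \<Rightarrow> complex set" where
  "quad_field m = {a + b * csqrt (of_int m) | a b. a \<in> \<rat> \<and> b \<in> \<rat>}"

definition is_alg_int :: "complex \<Rightarrow> bool" where
  "is_alg_int x \<longleftrightarrow> (\<exists>p :: int poly. lead_coeff p = 1 \<and> poly (map_poly of_int p) x = 0)"

definition quad_ints :: "int \<Rightarrow> complex set" where
  "quad_ints m = {x \<in> quad_field m. is_alg_int x}"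

definition is_ideal_in :: "complex set \<Rightarrow> complex set \<Rightarrow> bool" where
  "is_ideal_in R I \<longleftrightarrow> I \<subseteq> R \<and> 0 \<in> I \<and> (\<forall>x\<in>I. \<forall>y\<in>I. x + y \<in> I \<and> x - y \<in> I)
     \<and> (\<forall>r\<in>R. \<forall>x\<in>I. r * x \<in> I)"

definition nonzero_ideals :: "complex set \<Rightarrow> complex set set" where
  "nonzero_ideals R = {I. is_ideal_in R I \<and> I \<noteq> {0}}"

definition ideal_equiv :: "complex set \<Rightarrow> (complex set \<times> complex set) set" where
  "ideal_equiv R = {(I, J). I \<in> nonzero_ideals R \<and> J \<in> nonzero_ideals R \<and>
      (\<exists>\<alpha>\<in>R. \<exists>\<beta>\<in>R. \<alpha> \<noteq> 0 \<and> \<beta> \<noteq> 0 \<and> (\<lambda>x. \<alpha> * x) ` I = (\<lambda>x. \<beta> * x) ` J)}"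

definition class_number :: "int \<Rightarrow> nat" where
  "class_number m = card (nonzero_ideals (quad_ints m) // ideal_equiv (quad_ints m))"

end

theory Submission
  imports Defs "HOL-Number_Theory.Number_Theory" "HOL-Analysis.Kronecker_Approximation_Theorem"
begin

lemma sqf_sq_dvd:
  fixes m g z :: int
  assumes sqf: "squarefree m" and d: "g^2 dvd m * z^2"
  shows "g dvd z"
proof (cases "g = 0")
  case True
  then have "m * z^2 = 0" using d by simp
  moreover have "m \<noteq> 0" using sqf by (metis not_squarefree_0)
  ultimately show ?thesis using True by simp
next
  case False
  define h where "h = gcd g z"
  have h0: "h \<noteq> 0" using False by (simp add: h_def)
  obtain g' z' where g': "g = g' * h" and z': "z = z' * h" and cop: "coprime g' z'"
    using gcd_coprime_exists[of g z] False unfolding h_def by auto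
  have "(h^2) * g'^2 dvd (h^2) * (m * z'^2)"
    using d by (simp add: g' z' power_mult_distrib mult_ac)
  then have "g'^2 dvd m * z'^2" using h0 by simp
  moreover have "coprime (g'^2) (z'^2)" using cop by simp
  ultimately have "g'^2 dvd m"
    by (metis coprime_dvd_mult_left_iff mult.commute)
  then have "g' dvd 1" using sqf squarefreeD by blast
  then have "g' dvd z'" using one_dvd dvd_trans by blast
  then show ?thesis using g' z' by (simp add: mult_dvd_mono)
qed

lemma sqf_nonsquare:
  fixes m a b :: int
  assumes sqf: "squarefree m" and m1: "m > 1" and e: "m * b^2 = a^2"
  shows "b = 0"
proof (rule ccontr)
  assume b0: "b \<noteq> 0"
  have "b^2 dvd a^2" using e by (metis dvd_triv_right)
  then have "b dvd a" by simp
  then obtain t where t: "a = b * t" by blast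
  have "m * b^2 = t^2 * b^2" using e t by (simp add: power_mult_distrib)
  then have "m = t^2" using b0 by simp
  then have "t^2 dvd m" by simp
  then have "t dvd 1" using sqf squarefreeD by blast
  then have "t^2 = 1" by (metis abs_square_eq_1 zdvd1_eq)
  then show False using \<open>m = t^2\<close> m1 by simp
qed

lemma sqf_rat_int:
  fixes m :: int and b :: rat
  assumes sqf: "squarefree m" and mb: "of_int m * b^2 \<in> \<int>"
  shows "b \<in> \<int>"
proof -
  obtain p q where pq: "quotient_of b = (p, q)" by (cases "quotient_of b") auto
  have q0: "q > 0" using quotient_of_denom_pos[OF pq] .
  have cop: "coprime p q" using quotient_of_coprime[OF pq] .
  have bq: "b = of_int p / of_int q" using quotient_of_div[OF pq] .
  obtain n where n: "of_int m * b^2 = of_int n" using mb by (auto elim: Ints_cases)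
  have "of_int m * of_int p ^ 2 = (of_int n * of_int q ^ 2 :: rat)"
    using n q0 by (simp add: bq power_divide field_simps)
  then have e: "m * p^2 = n * q^2"
    by (metis of_int_eq_iff of_int_mult of_int_power)
  then have "q^2 dvd m * p^2" by simp
  then have "q dvd p" using sqf_sq_dvd[OF sqf] by blast
  then have "q dvd 1" using cop by (meson coprime_common_divisor dvd_refl)
  then have "q = 1" using q0 by simp
  then show ?thesis using bq by simp
qed

lemma map_poly_hom_add:
  assumes "f 0 = 0" "\<And>a b. f (a + b) = f a + f b"
  shows "map_poly f (p + q) = map_poly f p + map_poly f q"
  by (intro poly_eqI) (simp add: coeff_map_poly assms)

lemma map_poly_hom_mult:
  fixes f :: "'a::comm_ring_1 \<Rightarrow> 'b::comm_ring_1"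
  assumes f0: "f 0 = 0" and fa: "\<And>a b. f (a + b) = f a + f b" and fm: "\<And>a b. f (a * b) = f a * f b"
  shows "map_poly f (p * q) = map_poly f p * map_poly f q"
proof (induction p)
  case 0
  then show ?case by (simp add: f0)
next
  case (pCons a p)
  have "map_poly f (pCons a p * q) = map_poly f (Polynomial.smult a q + pCons 0 (p * q))"
    by simp
  also have "\<dots> = Polynomial.smult (f a) (map_poly f q) + pCons 0 (map_poly f p * map_poly f q)"
    by (simp add: map_poly_hom_add[OF f0 fa] map_poly_smult[OF f0 fm] map_poly_pCons[where f=f, OF f0] pCons.IH f0)
  also have "\<dots> = map_poly f (pCons a p) * map_poly f q"
    by (simp add: map_poly_pCons[where f=f, OF f0])
  finally show ?case .
qed

lemma map_poly_of_int_mult: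
  "map_poly (of_int :: int \<Rightarrow> 'b::comm_ring_1) (p * q) = map_poly of_int p * map_poly of_int q"
  by (rule map_poly_hom_mult) auto

lemma map_poly_of_rat_mult:
  "map_poly (of_rat :: rat \<Rightarrow> 'b::field_char_0) (p * q) = map_poly of_rat p * map_poly of_rat q"
  by (rule map_poly_hom_mult) (auto simp: of_rat_add of_rat_mult)

lemma map_poly_of_rat_add:
  "map_poly (of_rat :: rat \<Rightarrow> 'b::field_char_0) (p + q) = map_poly of_rat p + map_poly of_rat q"
  by (rule map_poly_hom_add) (auto simp: of_rat_add)

lemma smult_cancel':
  fixes c :: "'a::idom"
  assumes "c \<noteq> 0" "Polynomial.smult c p = Polynomial.smult c q"
  shows "p = q"
proof (rule poly_eqI)
  fix n
  from assms(2) have "poly.coeff (Polynomial.smult c p) n = poly.coeff (Polynomial.smult c q) n" by simp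
  then show "poly.coeff p n = poly.coeff q n" using assms(1) by simp
qed

lemma content_nonneg_int: "(0::int) \<le> Polynomial.content p"
  by (metis abs_ge_zero normalize_content normalize_int_def)

lemma map_poly_of_int_inj:
  assumes "map_poly (of_int :: int \<Rightarrow> 'b::ring_char_0) p = map_poly of_int q"
  shows "p = q"
proof (rule poly_eqI)
  fix n
  have "poly.coeff (map_poly (of_int :: int \<Rightarrow> 'b) p) n = poly.coeff (map_poly of_int q) n" using assms by simp
  then show "poly.coeff p n = poly.coeff q n" by (simp add: coeff_map_poly)
qed

lemma rat_poly_clear:
  fixes s :: "rat poly"
  shows "\<exists>e s'. e > (0::int) \<and> Polynomial.smult (of_int e) s = map_poly of_int s'"
proof (induction s)
  case 0
  show ?case by (rule exI[of _ 1], rule exI[of _ 0]) simp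
next
  case (pCons a s)
  then obtain e s' where e: "e > 0" and es: "Polynomial.smult (of_int e) s = map_poly of_int s'" by blast
  obtain p q where pq: "quotient_of a = (p, q)" by (cases "quotient_of a") auto
  have q0: "q > 0" using quotient_of_denom_pos[OF pq] .
  have a: "a = of_int p / of_int q" using quotient_of_div[OF pq] .
  have "Polynomial.smult (of_int (e * q)) (pCons a s) = pCons (of_int (e * p)) (Polynomial.smult (of_int q) (Polynomial.smult (of_int e) s))"
    using q0 by (simp add: a field_simps)
  also have "\<dots> = map_poly of_int (pCons (e * p) (Polynomial.smult q s'))"
    by (simp add: es map_poly_pCons map_poly_smult)
  finally show ?case using e q0 by (intro exI[of _ "e * q"] exI[of _ "pCons (e * p) (Polynomial.smult q s')"]) simp
qed

lemma content_monic_int: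
  fixes p :: "int poly"
  assumes "lead_coeff p = 1"
  shows "Polynomial.content p = 1"
proof -
  have "Polynomial.content p dvd 1" using content_dvd_coeff[of p "degree p"] assms by simp
  moreover have "Polynomial.content p \<ge> 0" using normalize_content[of p] by (metis abs_ge_zero normalize_int_def)
  ultimately show ?thesis by simp
qed

lemma gauss_quad:
  fixes p :: "int poly" and t N :: rat and s :: "rat poly"
  assumes lc: "lead_coeff p = 1" and eq: "map_poly of_int p = [:N, t, 1:] * s"
  shows "t \<in> \<int> \<and> N \<in> \<int>"
proof -
  define q where "q = [:N, t, 1:]"
  obtain e1 q1 where e1: "e1 > 0" and eq1: "Polynomial.smult (of_int e1) q = map_poly of_int q1"
    using rat_poly_clear[of q] by blast
  obtain e2 s1 where e2: "e2 > 0" and eq2: "Polynomial.smult (of_int e2) s = map_poly of_int s1"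
    using rat_poly_clear[of s] by blast
  have "map_poly (of_int :: int \<Rightarrow> rat) (Polynomial.smult (e1 * e2) p) = Polynomial.smult (of_int e1 * of_int e2) (q * s)"
    using eq by (simp add: map_poly_smult q_def)
  also have "\<dots> = Polynomial.smult (of_int e1) q * Polynomial.smult (of_int e2) s" by (simp add: mult_ac)
  also have "\<dots> = map_poly of_int (q1 * s1)" by (simp add: eq1 eq2 map_poly_of_int_mult)
  finally have E: "Polynomial.smult (e1 * e2) p = q1 * s1" by (rule map_poly_of_int_inj)
  have cp: "Polynomial.content p = 1" using content_monic_int[OF lc] .
  have q1nz: "q1 \<noteq> 0"
  proof
    assume "q1 = 0"
    then have "Polynomial.smult (of_int e1) q = 0" using eq1 by simp
    then show False using e1 by (simp add: q_def)
  qed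
  have s1nz: "s1 \<noteq> 0" using E e1 e2 lc by auto
  define c1 where "c1 = Polynomial.content q1"
  define c2 where "c2 = Polynomial.content s1"
  define q1' where "q1' = primitive_part q1"
  define s1' where "s1' = primitive_part s1"
  have q1d: "q1 = Polynomial.smult c1 q1'" by (simp add: c1_def q1'_def)
  have s1d: "s1 = Polynomial.smult c2 s1'" by (simp add: c2_def s1'_def)
  have cq1': "Polynomial.content q1' = 1" using q1nz by (simp add: q1'_def)
  have cs1': "Polynomial.content s1' = 1" using s1nz by (simp add: s1'_def)
  have "Polynomial.content (Polynomial.smult (e1 * e2) p) = Polynomial.content (q1 * s1)" using E by simp
  then have ce: "e1 * e2 = c1 * c2" using e1 e2 cp
    by (simp add: content_mult c1_def c2_def abs_mult)
  have c1nz: "c1 \<noteq> 0" using q1nz by (simp add: c1_def)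
  have c2nz: "c2 \<noteq> 0" using s1nz by (simp add: c2_def)
  have "Polynomial.smult (e1 * e2) p = Polynomial.smult (c1 * c2) (q1' * s1')" using E by (simp add: q1d s1d mult_ac)
  then have "Polynomial.smult (e1 * e2) p = Polynomial.smult (e1 * e2) (q1' * s1')" using ce by simp
  then have pe: "p = q1' * s1'" 
  proof (rule smult_cancel'[rotated])
    show "e1 * e2 \<noteq> 0" using e1 e2 by simp
  qed
  then have "lead_coeff q1' * lead_coeff s1' = 1" using lc by (simp add: lead_coeff_mult)
  then have l1: "lead_coeff q1' = 1 \<or> lead_coeff q1' = -1" by (auto simp: zmult_eq_1_iff)
  have "poly.coeff (Polynomial.smult (of_int e1) q) 2 = of_int e1" by (simp add: q_def numeral_2_eq_2)
  moreover have "degree q1 = 2"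
  proof -
    have "degree (Polynomial.smult (of_int e1 :: rat) q) = 2" using e1 by (simp add: q_def)
    then show ?thesis using eq1 by (simp add: degree_map_poly)
  qed
  ultimately have "poly.coeff q1 2 = e1" using eq1 by (simp add: coeff_map_poly)
  then have "c1 * lead_coeff q1' = e1" using q1d \<open>degree q1 = 2\<close> q1nz
    by (metis coeff_smult degree_smult_eq c1nz)
  moreover have "c1 \<ge> 0" by (simp add: c1_def content_nonneg_int)
  ultimately have lq: "lead_coeff q1' = 1" and c1e: "c1 = e1" using l1 e1
    by (auto simp: mult_less_0_iff)
  have "Polynomial.smult (of_int e1) q = Polynomial.smult (of_int e1) (map_poly of_int q1')"
    using eq1 by (simp add: q1d map_poly_smult c1e)
  then have qq: "q = map_poly of_int q1'"
  proof (rule smult_cancel'[rotated])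
    show "(of_int e1 :: rat) \<noteq> 0" using e1 by simp
  qed
  have "t = poly.coeff q 1" by (simp add: q_def)
  also have "\<dots> = of_int (poly.coeff q1' 1)" by (simp add: qq coeff_map_poly)
  finally have "t \<in> \<int>" by simp
  moreover have "N = poly.coeff q 0" by (simp add: q_def)
  then have "N = of_int (poly.coeff q1' 0)" by (simp add: qq coeff_map_poly)
  then have "N \<in> \<int>" by simp
  ultimately show ?thesis by blast
qed

lemma of_real_of_rat_c: "complex_of_real (of_rat q) = of_rat q"
proof (cases q)
  case (Fract a b)
  then show ?thesis by (simp add: of_rat_rat)
qed

locale qf =
  fixes m :: int
  assumes m_gt1: "m > 1" and sqf: "squarefree m"
begin

definition r :: real where "r = sqrt (real_of_int m)"
definition w :: complex where "w = complex_of_real r"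

lemma r_pos: "r > 0" using m_gt1 by (simp add: r_def)
lemma r_sq: "r * r = real_of_int m" using m_gt1 by (simp add: r_def)
lemma w_sq: "w * w = of_int m"
  unfolding w_def by (metis of_real_mult r_sq of_real_of_int_eq)
lemma csqrt_m: "csqrt (of_int m) = w"
proof -
  have "csqrt (complex_of_real (real_of_int m)) = complex_of_real (sqrt (real_of_int m))"
    using m_gt1 by (intro csqrt_of_real) simp
  then show ?thesis by (simp add: w_def r_def)
qed

lemma nonsq: "m * b^2 = a^2 \<Longrightarrow> b = 0"
  using sqf_nonsquare[OF sqf m_gt1] by blast

lemma r_irrat: "r \<notin> \<rat>"
proof
  assume "r \<in> \<rat>"
  then obtain p q where q0: "q > 0" and rq: "r = of_int p / of_int q"
    by (auto elim: Rats_cases')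
  have "real_of_int m = (of_int p / of_int q)^2" using r_sq rq by (simp add: power2_eq_square)
  then have "real_of_int m * of_int q ^ 2 = of_int p ^ 2" using q0 by (simp add: power_divide field_simps)
  then have "m * q^2 = p^2" by (metis of_int_eq_iff of_int_mult of_int_power)
  then have "q = 0" by (rule nonsq)
  then show False using q0 by simp
qed

lemma lin_indep_real:
  fixes a b :: real
  assumes "a \<in> \<rat>" "b \<in> \<rat>" "a + b * r = 0"
  shows "a = 0 \<and> b = 0"
proof (cases "b = 0")
  case True then show ?thesis using assms by simp
next
  case False
  then have "r = - a / b" using assms(3) by (simp add: field_simps add_eq_0_iff)
  then have "r \<in> \<rat>" using assms by simp
  then show ?thesis using r_irrat by simp
qed

lemma lin_indep:
  fixes a b :: complex
  assumes "a \<in> \<rat>" "b \<in> \<rat>" "a + b * w = 0"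
  shows "a = 0 \<and> b = 0"
proof -
  obtain a' where a': "a = of_rat a'" using assms(1) by (auto elim: Rats_cases)
  obtain b' where b': "b = of_rat b'" using assms(2) by (auto elim: Rats_cases)
  have "complex_of_real (of_rat a' + of_rat b' * r) = 0"
    using assms(3) by (simp add: a' b' w_def flip: of_real_of_rat_c)
  then have "(of_rat a' :: real) + of_rat b' * r = 0" by (simp only: of_real_eq_0_iff)
  then have "(of_rat a' :: real) = 0 \<and> (of_rat b' :: real) = 0"
    by (intro lin_indep_real) auto
  then show ?thesis by (simp add: a' b')
qed


definition el :: "int \<Rightarrow> int \<Rightarrow> complex" where
  "el A B = (of_int A + of_int B * w) / 2"

definition Rg :: "complex set" where
  "Rg = {el A B | A B. 4 dvd (A^2 - m * B^2)}"

lemma el_inj: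
  assumes "el A B = el C D" shows "A = C \<and> B = D"
proof -
  have h: "(of_int A + of_int B * w :: complex) = of_int C + of_int D * w"
    using assms unfolding el_def by (metis divide_cancel_right zero_neq_numeral)
  have "(of_int (A - C) :: complex) + of_int (B - D) * w = (of_int A + of_int B * w) - (of_int C + of_int D * w)"
    by (simp add: algebra_simps)
  also have "\<dots> = 0" using h by simp
  finally have "(of_int (A - C) :: complex) + of_int (B - D) * w = 0" .
  then have "(of_int (A - C) :: complex) = 0 \<and> (of_int (B - D) :: complex) = 0"
    by (intro lin_indep) auto
  then show ?thesis by simp
qed

lemma el_eq_iff: "el A B = el C D \<longleftrightarrow> A = C \<and> B = D"
  using el_inj by blast

lemma el_add: "el A B + el C D = el (A + C) (B + D)"
  by (simp add: el_def algebra_simps add_divide_distrib)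

lemma el_diff: "el A B - el C D = el (A - C) (B - D)"
  by (simp add: el_def algebra_simps diff_divide_distrib)

lemma el_uminus: "- el A B = el (- A) (- B)"
  by (simp add: el_def algebra_simps)

lemma el_0: "el 0 0 = 0" by (simp add: el_def)

lemma el_eq_0_iff: "el A B = 0 \<longleftrightarrow> A = 0 \<and> B = 0"
  using el_eq_iff[of A B 0 0] by (simp add: el_0)

lemma of_int_el: "of_int n = el (2 * n) 0"
  by (simp add: el_def)

lemma w_el: "w = el 0 2"
  by (simp add: el_def)

lemma el_real: "el A B = complex_of_real ((of_int A + of_int B * r) / 2)"
  by (simp add: el_def w_def)

lemma of_int_half_even:
  assumes "even (X::int)" shows "(of_int (X div 2) :: 'a::field_char_0) = of_int X / 2"
proof -
  obtain k where "X = 2 * k" using assms by blast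
  then show ?thesis by simp
qed

lemma el_mult_gen:
  assumes "even (A * C + m * B * D)" "even (A * D + B * C)"
  shows "el A B * el C D = el ((A * C + m * B * D) div 2) ((A * D + B * C) div 2)"
proof -
  have "el A B * el C D = (of_int A * of_int C + of_int B * of_int D * (w * w) + (of_int A * of_int D + of_int B * of_int C) * w) / 4"
    by (simp add: el_def field_simps)
  also have "\<dots> = (of_int (A * C + m * B * D) + of_int (A * D + B * C) * w) / 4"
    by (simp add: w_sq algebra_simps)
  also have "\<dots> = el ((A * C + m * B * D) div 2) ((A * D + B * C) div 2)"
    unfolding el_def of_int_half_even[OF assms(1)] of_int_half_even[OF assms(2)] by (simp add: field_simps)
  finally show ?thesis .
qed

lemma m_not_4dvd: "\<not> 4 dvd m"
proof
  assume "4 dvd m"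
  then have "2^2 dvd m" by simp
  then have "(2::int) dvd 1" using sqf squarefreeD by blast
  then show False by simp
qed

definition Rpar :: "int \<Rightarrow> int \<Rightarrow> bool" where
  "Rpar A B \<longleftrightarrow> (even A \<and> even B) \<or> (m mod 4 = 1 \<and> even (A - B))"

lemma Rpar_of:
  assumes "4 dvd (A^2 - m * B^2)" shows "Rpar A B"
proof -
  have aux1: "\<not> 4 dvd (4 * X + 1)" for X :: int by presburger
  consider (ee) "even A" "even B" | (oe) "odd A" "even B" | (eo) "even A" "odd B" | (oo) "odd A" "odd B"
    by blast
  then show ?thesis
  proof cases
    case ee then show ?thesis by (simp add: Rpar_def)
  next
    case oe
    then obtain a b where ab: "A = 2 * a + 1" "B = 2 * b" by (metis evenE oddE)
    have "A^2 - m * B^2 = 4 * (a^2 + a - m * b^2) + 1" by (simp add: ab power2_eq_square algebra_simps)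
    then show ?thesis using assms aux1[of "a^2 + a - m * b^2"] by simp
  next
    case eo
    then obtain a b where ab: "A = 2 * a" "B = 2 * b + 1" by (metis evenE oddE)
    have "A^2 - m * B^2 = 4 * (a^2 - m * b^2 - m * b) - m" by (simp add: ab power2_eq_square algebra_simps)
    then have "m = 4 * (a^2 - m * b^2 - m * b) - (A^2 - m * B^2)" by simp
    then have "4 dvd m" using assms by (metis dvd_diff dvd_triv_left)
    then show ?thesis using m_not_4dvd by simp
  next
    case oo
    then obtain a b where ab: "A = 2 * a + 1" "B = 2 * b + 1" by (metis oddE)
    have "A^2 - m * B^2 = 4 * (a^2 + a - m * b^2 - m * b) + (1 - m)" by (simp add: ab power2_eq_square algebra_simps)
    then have "1 - m = (A^2 - m * B^2) - 4 * (a^2 + a - m * b^2 - m * b)" by simp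
    then have "4 dvd (1 - m)" using assms by (metis dvd_diff dvd_triv_left)
    then have "m mod 4 = 1" by presburger
    moreover have "even (A - B)" using ab by simp
    ultimately show ?thesis by (simp add: Rpar_def)
  qed
qed

lemma Rpar_mult:
  assumes "Rpar A B" "Rpar C D"
  shows "even (A * C + m * B * D) \<and> even (A * D + B * C)"
proof -
  { assume "even A" "even B"
    then have ?thesis by simp }
  moreover
  { assume "even C" "even D"
    then have ?thesis by simp }
  moreover
  { assume h: "m mod 4 = 1" "even (A - B)" "even (C - D)"
    obtain s where "A - B = 2 * s" using h(2) by blast
    then have s: "A = B + 2 * s" by simp
    obtain t where "C - D = 2 * t" using h(3) by blast
    then have t: "C = D + 2 * t" by simp
    have u: "m = 4 * (m div 4) + 1" using h(1) by presburger
    define u where "u = m div 4"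
    have u: "m = 4 * u + 1" using u u_def by simp
    have "A * C + m * B * D = 2 * (B * D + B * t + s * D + 2 * s * t + 2 * u * B * D)"
      by (simp add: s t u algebra_simps)
    moreover have "A * D + B * C = 2 * (B * D + s * D + B * t)"
      by (simp add: s t algebra_simps)
    ultimately have ?thesis by simp }
  ultimately show ?thesis using assms unfolding Rpar_def by blast
qed

lemma el_mult:
  assumes "4 dvd (A^2 - m * B^2)" "4 dvd (C^2 - m * D^2)"
  shows "el A B * el C D = el ((A * C + m * B * D) div 2) ((A * D + B * C) div 2)"
  using Rpar_mult[OF Rpar_of[OF assms(1)] Rpar_of[OF assms(2)]] by (intro el_mult_gen) auto

lemma norm_identity:
  "(A * C + m * B * D)^2 - m * (A * D + B * C)^2 = (A^2 - m * B^2) * (C^2 - m * D^2)"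
  by (simp add: power2_eq_square algebra_simps)

lemma Rg_mult_el:
  assumes "4 dvd (A^2 - m * B^2)" "4 dvd (C^2 - m * D^2)"
  defines "A' \<equiv> (A * C + m * B * D) div 2" and "B' \<equiv> (A * D + B * C) div 2"
  shows "A'^2 - m * B'^2 = ((A^2 - m * B^2) div 4) * ((C^2 - m * D^2) div 4) * 4"
proof -
  have ev: "even (A * C + m * B * D) \<and> even (A * D + B * C)"
    using Rpar_mult[OF Rpar_of[OF assms(1)] Rpar_of[OF assms(2)]] .
  have a2: "A * C + m * B * D = 2 * A'" using ev unfolding A'_def by simp
  have b2: "A * D + B * C = 2 * B'" using ev unfolding B'_def by simp
  obtain N1 where N1: "A^2 - m * B^2 = 4 * N1" using assms(1) by blast
  obtain N2 where N2: "C^2 - m * D^2 = 4 * N2" using assms(2) by blast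
  have "(2 * A')^2 - m * (2 * B')^2 = (4 * N1) * (4 * N2)"
    using norm_identity[of A C B D] unfolding a2 b2 N1 N2 .
  then have "4 * (A'^2 - m * B'^2) = 16 * (N1 * N2)"
    by (simp add: power2_eq_square algebra_simps)
  then show ?thesis using N1 N2 by simp
qed

lemma Rg_el: "4 dvd (A^2 - m * B^2) \<Longrightarrow> el A B \<in> Rg"
  unfolding Rg_def by blast

lemma RgE:
  assumes "x \<in> Rg"
  obtains A B where "x = el A B" "4 dvd (A^2 - m * B^2)"
  using assms unfolding Rg_def by blast

lemma Rg_mult: "x \<in> Rg \<Longrightarrow> y \<in> Rg \<Longrightarrow> x * y \<in> Rg"
proof -
  assume "x \<in> Rg" "y \<in> Rg"
  then obtain A B C D where x: "x = el A B" "4 dvd (A^2 - m * B^2)" and y: "y = el C D" "4 dvd (C^2 - m * D^2)"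
    by (metis RgE)
  show "x * y \<in> Rg"
    unfolding x(1) y(1) el_mult[OF x(2) y(2)] by (rule Rg_el) (simp add: Rg_mult_el[OF x(2) y(2)])
qed

lemma Rg_add: "x \<in> Rg \<Longrightarrow> y \<in> Rg \<Longrightarrow> x + y \<in> Rg"
proof -
  assume "x \<in> Rg" "y \<in> Rg"
  then obtain A B C D where x: "x = el A B" "4 dvd (A^2 - m * B^2)" and y: "y = el C D" "4 dvd (C^2 - m * D^2)"
    by (metis RgE)
  have "(A + C)^2 - m * (B + D)^2 = (A^2 - m * B^2) + (C^2 - m * D^2) + 2 * (A * C - m * B * D)"
    by (simp add: power2_eq_square algebra_simps)
  moreover have "even (A * C - m * B * D)"
  proof -
    have "even (A * C + m * B * D)" using Rpar_mult[OF Rpar_of[OF x(2)] Rpar_of[OF y(2)]] by simp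
    moreover have "A * C - m * B * D = (A * C + m * B * D) - 2 * (m * B * D)" by (simp add: algebra_simps)
    ultimately show ?thesis by (metis dvd_diff dvd_triv_left)
  qed
  ultimately have "4 dvd ((A + C)^2 - m * (B + D)^2)" using x(2) y(2)
  proof -
    obtain k where "A * C - m * B * D = 2 * k" using \<open>even (A * C - m * B * D)\<close> by blast
    then have "2 * (A * C - m * B * D) = 4 * k" by simp
    then show ?thesis using x(2) y(2) \<open>(A + C)^2 - m * (B + D)^2 = _\<close> by (metis dvd_add dvd_triv_left)
  qed
  then show "x + y \<in> Rg" unfolding x(1) y(1) el_add by (rule Rg_el)
qed

lemma Rg_uminus: "x \<in> Rg \<Longrightarrow> - x \<in> Rg"
proof -
  assume "x \<in> Rg"
  then obtain A B where x: "x = el A B" "4 dvd (A^2 - m * B^2)" by (metis RgE)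
  then show "- x \<in> Rg" by (simp add: el_uminus Rg_el)
qed

lemma Rg_diff: "x \<in> Rg \<Longrightarrow> y \<in> Rg \<Longrightarrow> x - y \<in> Rg"
  using Rg_add[of x "- y"] Rg_uminus[of y] by simp

lemma Rg_of_int: "of_int n \<in> Rg"
  by (simp add: of_int_el Rg_el power2_eq_square)

lemma Rg_0: "0 \<in> Rg" using Rg_of_int[of 0] by simp
lemma Rg_1: "1 \<in> Rg" using Rg_of_int[of 1] by simp

lemma Rg_w: "w \<in> Rg"
  by (simp add: w_el Rg_el)


end

context qf
begin
lemma Rats_complex_cases:
  assumes "(a::complex) \<in> \<rat>" obtains a' where "a = of_rat a'"
  using assms by (auto elim: Rats_cases)

lemma Rg_subset_quad: "Rg \<subseteq> quad_ints m"
proof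
  fix x assume "x \<in> Rg"
  then obtain A B where x: "x = el A B" and d: "4 dvd (A^2 - m * B^2)" by (metis RgE)
  obtain N where N: "A^2 - m * B^2 = 4 * N" using d by blast
  have "x \<in> quad_field m"
    unfolding quad_field_def csqrt_m
    by (rule CollectI, rule exI[of _ "of_int A / 2"], rule exI[of _ "of_int B / 2"])
       (simp add: x el_def add_divide_distrib)
  moreover have "is_alg_int x"
    unfolding is_alg_int_def
  proof (rule exI[of _ "[:N, -A, 1:]"], intro conjI)
    show "lead_coeff [:N, - A, 1:] = 1" by simp
    have "(of_int (A^2 - m * B^2) :: complex) = of_int (4 * N)" using N by simp
    then have "(of_int N :: complex) = (of_int A ^ 2 - of_int m * of_int B ^ 2) / 4" by simp
    then show "poly (map_poly complex_of_int [:N, - A, 1:]) x = 0"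
      by (simp add: map_poly_pCons x el_def field_simps power2_eq_square w_sq[symmetric])
  qed
  ultimately show "x \<in> quad_ints m" by (simp add: quad_ints_def)
qed

lemma poly_map_of_rat_mult:
  "poly (map_poly (of_rat :: rat \<Rightarrow> complex) (p * q)) x = poly (map_poly of_rat p) x * poly (map_poly of_rat q) x"
  by (simp add: map_poly_of_rat_mult)

lemma poly_map_of_rat_add:
  "poly (map_poly (of_rat :: rat \<Rightarrow> complex) (p + q)) x = poly (map_poly of_rat p) x + poly (map_poly of_rat q) x"
  by (simp add: map_poly_of_rat_add)

lemma quad_subset_Rg: "quad_ints m \<subseteq> Rg"
proof
  fix x assume "x \<in> quad_ints m"
  then have xq: "x \<in> quad_field m" and xi: "is_alg_int x" by (auto simp: quad_ints_def)
  from xq obtain a b where ab: "x = a + b * w" "a \<in> \<rat>" "b \<in> \<rat>"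
    unfolding quad_field_def csqrt_m by blast
  obtain a' where a': "a = of_rat a'" using ab(2) by (rule Rats_complex_cases)
  obtain b' where b': "b = of_rat b'" using ab(3) by (rule Rats_complex_cases)
  obtain p where p: "lead_coeff p = 1" "poly (map_poly complex_of_int p) x = 0"
    using xi unfolding is_alg_int_def by blast
  show "x \<in> Rg"
  proof (cases "b' = 0")
    case True
    then have "x \<in> \<rat>" using ab a' b' by simp
    moreover have "algebraic_int x" using p by (subst algebraic_int_altdef_ipoly) blast
    ultimately have "x \<in> \<int>" using rational_algebraic_int_is_int by blast
    then obtain n where "x = of_int n" by (auto elim: Ints_cases)
    then show ?thesis by (simp add: Rg_of_int)
  next
    case False
    define q :: "rat poly" where "q = [:a'^2 - of_int m * b'^2, - 2 * a', 1:]"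
    define pQ :: "rat poly" where "pQ = map_poly of_int p"
    have mapQ: "map_poly (of_rat :: rat \<Rightarrow> complex) pQ = map_poly of_int p"
      by (simp add: pQ_def map_poly_map_poly o_def)
    have xw: "x = of_rat a' + of_rat b' * w" using ab a' b' by simp
    have poly_q: "poly (map_poly (of_rat :: rat \<Rightarrow> complex) q) x = 0"
    proof -
      have "poly (map_poly (of_rat :: rat \<Rightarrow> complex) q) x = (x - of_rat a')^2 - of_int m * (of_rat b')^2"
        by (simp add: q_def map_poly_pCons of_rat_diff of_rat_mult of_rat_power of_rat_minus power2_eq_square algebra_simps)
      also have "\<dots> = (of_rat b')^2 * (w * w - of_int m)"
        by (simp add: xw power2_eq_square algebra_simps)
      also have "\<dots> = 0" by (simp add: w_sq)
      finally show ?thesis .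
    qed
    have qnz: "q \<noteq> 0" by (simp add: q_def)
    have dq: "degree q = 2" by (simp add: q_def)
    define rr where "rr = pQ mod q"
    have decomp: "pQ = q * (pQ div q) + rr" by (simp add: rr_def)
    have "poly (map_poly (of_rat :: rat \<Rightarrow> complex) pQ) x = poly (map_poly of_rat q) x * poly (map_poly of_rat (pQ div q)) x + poly (map_poly of_rat rr) x"
      by (subst decomp) (simp add: poly_map_of_rat_add poly_map_of_rat_mult)
    then have prr: "poly (map_poly (of_rat :: rat \<Rightarrow> complex) rr) x = 0"
      using poly_q mapQ p(2) by simp
    have degrr: "rr = 0 \<or> degree rr < 2" using degree_mod_less[OF qnz, of pQ] dq by (simp add: rr_def)
    have rr_eq: "rr = pCons (poly.coeff rr 0) (pCons (poly.coeff rr 1) 0)"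
    proof (rule poly_eqI)
      fix n
      show "poly.coeff rr n = poly.coeff (pCons (poly.coeff rr 0) (pCons (poly.coeff rr 1) 0)) n"
      proof (cases n)
        case 0 then show ?thesis by simp
      next
        case (Suc k)
        then show ?thesis
        proof (cases k)
          case 0 then show ?thesis using Suc by simp
        next
          case (Suc k')
          then have "poly.coeff rr n = 0" using degrr \<open>n = Suc k\<close> by (auto intro: coeff_eq_0)
          then show ?thesis using Suc \<open>n = Suc k\<close> by simp
        qed
      qed
    qed
    define c0 where "c0 = poly.coeff rr 0"
    define c1 where "c1 = poly.coeff rr 1"
    have "poly (map_poly (of_rat :: rat \<Rightarrow> complex) rr) x = of_rat c0 + x * of_rat c1"
      by (subst rr_eq) (simp add: map_poly_pCons c0_def c1_def)
    then have "(of_rat (c0 + a' * c1) :: complex) + of_rat (b' * c1) * w = 0"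
      using prr by (simp add: xw of_rat_add of_rat_mult algebra_simps)
    then have "(of_rat (c0 + a' * c1) :: complex) = 0 \<and> (of_rat (b' * c1) :: complex) = 0"
      by (intro lin_indep) auto
    then have "c1 = 0" "c0 = 0" using False by auto
    then have "rr = 0" using rr_eq by (simp add: c0_def c1_def)
    then have "map_poly of_int p = [:a'^2 - of_int m * b'^2, - 2 * a', 1:] * (pQ div q)"
      using decomp by (simp add: pQ_def q_def)
    from gauss_quad[OF p(1) this]
    have ints: "- 2 * a' \<in> \<int>" "a'^2 - of_int m * b'^2 \<in> \<int>" by auto
    have "- (- 2 * a') \<in> \<int>" using ints(1) by (rule Ints_minus)
    then have "2 * a' \<in> \<int>" by simp
    then obtain A where A: "2 * a' = of_int A" by (auto elim: Ints_cases)
    obtain N where N: "a'^2 - of_int m * b'^2 = of_int N" using ints(2) by (auto elim: Ints_cases)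
    have mb: "of_int m * b'^2 = a'^2 - of_int N" using N by simp
    have "of_int m * (2 * b')^2 = 4 * (of_int m * b'^2)" by (simp add: power2_eq_square)
    also have "\<dots> = 4 * (a'^2 - of_int N)" by (simp only: mb)
    also have "\<dots> = (2 * a')^2 - 4 * of_int N" by (simp add: power2_eq_square algebra_simps)
    also have "\<dots> = of_int (A^2 - 4 * N)" by (simp add: A)
    finally have "of_int m * (2 * b')^2 = of_int (A^2 - 4 * N)" .
    then have "of_int m * (2 * b')^2 \<in> \<int>" by simp
    then have "2 * b' \<in> \<int>" by (rule sqf_rat_int[OF sqf])
    then obtain B where B: "2 * b' = of_int B" by (auto elim: Ints_cases)
    have "of_int (A^2 - m * B^2) = (2 * a')^2 - of_int m * (2 * b')^2" by (simp add: A B)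
    also have "\<dots> = 4 * (a'^2 - of_int m * b'^2)" by (simp add: power2_eq_square algebra_simps)
    also have "\<dots> = (of_int (4 * N) :: rat)" by (simp add: N)
    finally have "of_int (A^2 - m * B^2) = (of_int (4 * N) :: rat)" .
    then have "A^2 - m * B^2 = 4 * N" by (simp only: of_int_eq_iff)
    then have d4: "4 dvd (A^2 - m * B^2)" by simp
    have "x = el A B"
    proof -
      have "a' = of_int A / 2" "b' = of_int B / 2" using A B by auto
      then have e1: "(of_rat a' :: complex) = of_int A / 2" and e2: "(of_rat b' :: complex) = of_int B / 2"
        by (simp_all only: of_rat_divide of_rat_of_int_eq of_rat_numeral_eq)
      show ?thesis unfolding xw e1 e2 el_def by (simp add: add_divide_distrib)
    qed
    then show ?thesis using d4 by (simp add: Rg_el)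
  qed
qed

theorem quad_ints_eq: "quad_ints m = Rg"
  using Rg_subset_quad quad_subset_Rg by blast

end

context qf
begin

definition cA :: "complex \<Rightarrow> int" where "cA x = (THE A. \<exists>B. x = el A B)"
definition cB :: "complex \<Rightarrow> int" where "cB x = (THE B. \<exists>A. x = el A B)"

lemma cA_el [simp]: "cA (el A B) = A"
  unfolding cA_def by (rule the_equality) (auto simp: el_eq_iff)
lemma cB_el [simp]: "cB (el A B) = B"
  unfolding cB_def by (rule the_equality) (auto simp: el_eq_iff)

lemma Rg_coords: "x \<in> Rg \<Longrightarrow> x = el (cA x) (cB x)"
  by (erule RgE) simp

lemma Rg_dvd4: "x \<in> Rg \<Longrightarrow> 4 dvd (cA x ^ 2 - m * cB x ^ 2)"
  by (erule RgE) simp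

definition nrm :: "complex \<Rightarrow> int" where "nrm x = (cA x ^ 2 - m * cB x ^ 2) div 4"
definition cnj :: "complex \<Rightarrow> complex" where "cnj x = el (cA x) (- cB x)"

lemma nrm4: "x \<in> Rg \<Longrightarrow> 4 * nrm x = cA x ^ 2 - m * cB x ^ 2"
  using Rg_dvd4 unfolding nrm_def by simp

lemma cnj_Rg: "x \<in> Rg \<Longrightarrow> cnj x \<in> Rg"
  unfolding cnj_def using Rg_dvd4 by (intro Rg_el) simp

lemma cA_cnj [simp]: "cA (cnj x) = cA x" by (simp add: cnj_def)
lemma cB_cnj [simp]: "cB (cnj x) = - cB x" by (simp add: cnj_def)

lemma cnj_cnj: "x \<in> Rg \<Longrightarrow> cnj (cnj x) = x"
  using Rg_coords[of x] by (simp add: cnj_def)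

lemma nrm_cnj [simp]: "nrm (cnj x) = nrm x"
  by (simp add: nrm_def)

lemma mult_cnj: "x \<in> Rg \<Longrightarrow> x * cnj x = of_int (nrm x)"
proof -
  assume x: "x \<in> Rg"
  define A where "A = cA x"
  define B where "B = cB x"
  have d: "4 dvd (A^2 - m * B^2)" using Rg_dvd4[OF x] by (simp add: A_def B_def)
  have d': "4 dvd (A^2 - m * (-B)^2)" using d by simp
  have "x * cnj x = el A B * el A (- B)" using Rg_coords[OF x] by (simp add: cnj_def A_def B_def)
  also have "\<dots> = el ((A * A + m * B * (- B)) div 2) ((A * (- B) + B * A) div 2)"
    by (rule el_mult[OF d d'])
  also have "\<dots> = el ((A^2 - m * B^2) div 2) 0" by (simp add: power2_eq_square algebra_simps)
  also have "\<dots> = of_int ((A^2 - m * B^2) div 4)"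
  proof -
    obtain N where N: "A^2 - m * B^2 = 4 * N" using d by blast
    show ?thesis by (simp add: N of_int_el)
  qed
  also have "\<dots> = of_int (nrm x)" by (simp add: nrm_def A_def B_def)
  finally show ?thesis .
qed

lemma add_cnj: "x \<in> Rg \<Longrightarrow> x + cnj x = of_int (cA x)"
proof -
  assume x: "x \<in> Rg"
  have "x + cnj x = el (cA x) (cB x) + el (cA x) (- cB x)" using Rg_coords[OF x] by (simp add: cnj_def)
  also have "\<dots> = el (2 * cA x) 0" by (simp add: el_add)
  finally show ?thesis by (simp add: of_int_el)
qed

lemma cA_add: "cA (el A B + el C D) = A + C" by (simp add: el_add)
lemma cB_add: "cB (el A B + el C D) = B + D" by (simp add: el_add)

lemma Rg_add_coords:
  assumes "x \<in> Rg" "y \<in> Rg"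
  shows "cA (x + y) = cA x + cA y" "cB (x + y) = cB x + cB y"
  by (subst Rg_coords[OF assms(1)], subst Rg_coords[OF assms(2)], simp add: el_add)+

lemma Rg_diff_coords:
  assumes "x \<in> Rg" "y \<in> Rg"
  shows "cA (x - y) = cA x - cA y" "cB (x - y) = cB x - cB y"
  by (subst Rg_coords[OF assms(1)], subst Rg_coords[OF assms(2)], simp add: el_diff)+

lemma of_int_mult_el: "of_int n * el A B = el (n * A) (n * B)"
  by (simp add: el_def field_simps)

lemma Rg_int_mult_coords:
  assumes "x \<in> Rg"
  shows "cA (of_int n * x) = n * cA x" "cB (of_int n * x) = n * cB x"
  by (subst Rg_coords[OF assms], simp add: of_int_mult_el)+

lemma nrm_mult:
  assumes x: "x \<in> Rg" and y: "y \<in> Rg"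
  shows "nrm (x * y) = nrm x * nrm y"
proof -
  have dx: "4 dvd (cA x^2 - m * cB x^2)" and dy: "4 dvd (cA y^2 - m * cB y^2)"
    using Rg_dvd4 x y by auto
  have xy: "x * y = el ((cA x * cA y + m * cB x * cB y) div 2) ((cA x * cB y + cB x * cA y) div 2)"
    using el_mult[OF dx dy] Rg_coords[OF x] Rg_coords[OF y] by simp
  show ?thesis
    unfolding nrm_def xy cA_el cB_el Rg_mult_el[OF dx dy] by simp
qed

lemma cnj_mult:
  assumes x: "x \<in> Rg" and y: "y \<in> Rg"
  shows "cnj (x * y) = cnj x * cnj y"
proof -
  have dx: "4 dvd (cA x^2 - m * cB x^2)" and dy: "4 dvd (cA y^2 - m * cB y^2)"
    using Rg_dvd4 x y by auto
  have dx': "4 dvd (cA x^2 - m * (- cB x)^2)" and dy': "4 dvd (cA y^2 - m * (- cB y)^2)"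
    using dx dy by auto
  have xy: "x * y = el ((cA x * cA y + m * cB x * cB y) div 2) ((cA x * cB y + cB x * cA y) div 2)"
    using el_mult[OF dx dy] Rg_coords[OF x] Rg_coords[OF y] by simp
  have ev: "even (cA x * cB y + cB x * cA y)"
    using Rpar_mult[OF Rpar_of[OF dx] Rpar_of[OF dy]] by simp
  have "cnj x * cnj y = el ((cA x * cA y + m * (- cB x) * (- cB y)) div 2) ((cA x * (- cB y) + (- cB x) * cA y) div 2)"
    unfolding cnj_def by (rule el_mult[OF dx' dy'])
  also have "\<dots> = el ((cA x * cA y + m * cB x * cB y) div 2) (- ((cA x * cB y + cB x * cA y) div 2))"
  proof -
    obtain k where k: "cA x * cB y + cB x * cA y = 2 * k" using ev by blast
    have "cA x * (- cB y) + (- cB x) * cA y = 2 * (- k)" using k by (simp add: algebra_simps)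
    then have e1: "(cA x * (- cB y) + (- cB x) * cA y) div 2 = - k" by simp
    have e2: "(cA x * cB y + cB x * cA y) div 2 = k" using k by simp
    show ?thesis unfolding e1 e2 by simp
  qed
  also have "\<dots> = cnj (x * y)" by (simp add: xy cnj_def)
  finally show ?thesis by simp
qed

lemma cnj_add:
  assumes x: "x \<in> Rg" and y: "y \<in> Rg"
  shows "cnj (x + y) = cnj x + cnj y"
  using Rg_add_coords[OF x y] by (simp add: cnj_def el_add)

lemma cnj_of_int [simp]: "cnj (of_int n) = of_int n"
  by (simp add: of_int_el cnj_def)

lemma nrm_of_int [simp]: "nrm (of_int n) = n^2"
  by (simp add: of_int_el nrm_def power2_eq_square)

lemma nrm_w: "nrm w = - m"
  by (simp add: w_el nrm_def)

lemma nrm_eq_0_iff: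
  assumes x: "x \<in> Rg" shows "nrm x = 0 \<longleftrightarrow> x = 0"
proof
  assume "nrm x = 0"
  then have "cA x ^ 2 = m * cB x ^ 2" using nrm4[OF x] by simp
  then have "cB x = 0" using nonsq[of "cB x" "cA x"] by simp
  then have "cA x = 0" using \<open>cA x ^ 2 = m * cB x ^ 2\<close> by simp
  then show "x = 0" using Rg_coords[OF x] \<open>cB x = 0\<close> by (simp add: el_0)
next
  assume "x = 0"
  then show "nrm x = 0" using nrm_of_int[of 0] by simp
qed

lemma of_int_inj_c: "(of_int a :: complex) = of_int b \<Longrightarrow> a = b" by simp

lemma nrm_add:
  assumes x: "x \<in> Rg" and y: "y \<in> Rg"
  shows "nrm (x + y) = nrm x + nrm y + cA (x * cnj y)"
proof -
  have xy: "x * cnj y \<in> Rg" using x y by (simp add: Rg_mult cnj_Rg)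
  have "cnj (x * cnj y) = cnj x * y" using cnj_mult[OF x cnj_Rg[OF y]] cnj_cnj[OF y] by simp
  then have tr: "x * cnj y + cnj x * y = of_int (cA (x * cnj y))" using add_cnj[OF xy] by simp
  have "(of_int (nrm (x + y)) :: complex) = (x + y) * cnj (x + y)"
    using mult_cnj[OF Rg_add[OF x y]] by simp
  also have "\<dots> = x * cnj x + y * cnj y + (x * cnj y + cnj x * y)"
    by (simp add: cnj_add[OF x y] algebra_simps)
  also have "\<dots> = of_int (nrm x + nrm y + cA (x * cnj y))"
    by (simp add: mult_cnj[OF x] mult_cnj[OF y] tr)
  finally show ?thesis by (rule of_int_inj_c)
qed

lemma el_even_A:
  assumes "el A 0 \<in> Rg" shows "even A"
proof -
  have "4 dvd (A^2 - m * 0^2)" using Rg_dvd4[OF assms] by simp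
  then have "2 * 2 dvd A^2" by simp
  then have "2 dvd A^2" using dvd_mult_left by blast
  then show ?thesis by simp
qed

lemma Rg_div:
  assumes x: "x \<in> Rg" and g: "g > 0" and dA: "g dvd cA x" and dN: "g^2 dvd nrm x"
  shows "x / of_int g \<in> Rg"
proof -
  obtain a where a: "cA x = g * a" using dA by blast
  obtain n where n: "nrm x = g^2 * n" using dN by blast
  have "m * cB x ^ 2 = cA x ^ 2 - 4 * nrm x" using nrm4[OF x] by simp
  also have "\<dots> = g^2 * (a^2 - 4 * n)" by (simp add: a n power2_eq_square algebra_simps)
  finally have "g^2 dvd m * cB x ^ 2" by simp
  then have "g dvd cB x" by (rule sqf_sq_dvd[OF sqf])
  then obtain b where b: "cB x = g * b" by blast
  have "x / of_int g = el a b"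
    using Rg_coords[OF x] g by (simp add: a b el_def field_simps)
  moreover have "a^2 - m * b^2 = 4 * n"
  proof -
    have "g^2 * (a^2 - m * b^2) = g^2 * (4 * n)"
      using nrm4[OF x] by (simp add: a b n power2_eq_square algebra_simps)
    then show ?thesis using g by simp
  qed
  ultimately show ?thesis by (simp add: Rg_el)
qed

end

context qf
begin

definition Gn :: "complex set \<Rightarrow> int" where "Gn I = Gcd (nrm ` I)"

abbreviation isI :: "complex set \<Rightarrow> bool" where "isI I \<equiv> is_ideal_in Rg I"

lemma isI_sub: "isI I \<Longrightarrow> I \<subseteq> Rg" by (simp add: is_ideal_in_def)
lemma isI_0: "isI I \<Longrightarrow> 0 \<in> I" by (simp add: is_ideal_in_def)
lemma isI_add: "isI I \<Longrightarrow> x \<in> I \<Longrightarrow> y \<in> I \<Longrightarrow> x + y \<in> I" by (simp add: is_ideal_in_def)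
lemma isI_diff: "isI I \<Longrightarrow> x \<in> I \<Longrightarrow> y \<in> I \<Longrightarrow> x - y \<in> I" by (simp add: is_ideal_in_def)
lemma isI_mult: "isI I \<Longrightarrow> c \<in> Rg \<Longrightarrow> x \<in> I \<Longrightarrow> c * x \<in> I" by (simp add: is_ideal_in_def)
lemma isI_mult_int: assumes "isI I" "x \<in> I" shows "of_int n * x \<in> I"
  using isI_mult[OF assms(1) Rg_of_int assms(2)] .
lemma isI_uminus: "isI I \<Longrightarrow> x \<in> I \<Longrightarrow> - x \<in> I" using isI_diff[of I 0 x] isI_0 by simp
lemma isI_mem: "isI I \<Longrightarrow> x \<in> I \<Longrightarrow> x \<in> Rg" using isI_sub by blast
lemma isI_nrm: assumes "isI I" "x \<in> I" shows "of_int (nrm x) \<in> I"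
proof -
  have xr: "x \<in> Rg" using isI_mem[OF assms] .
  have "cnj x * x \<in> I" using isI_mult[OF assms(1) cnj_Rg[OF xr] assms(2)] .
  then show ?thesis using mult_cnj[OF xr] by (simp add: mult.commute)
qed

lemma Gn_dvd: "x \<in> I \<Longrightarrow> Gn I dvd nrm x"
  unfolding Gn_def by (rule Gcd_dvd) simp

lemma dvd_Gn: "(\<And>x. x \<in> I \<Longrightarrow> d dvd nrm x) \<Longrightarrow> d dvd Gn I"
  unfolding Gn_def by (rule Gcd_greatest) auto

lemma Gn_nonneg: "Gn I \<ge> 0"
  unfolding Gn_def by simp

lemma Gn_pos:
  assumes "isI I" "I \<noteq> {0}"
  shows "Gn I > 0"
proof -
  obtain x where x: "x \<in> I" "x \<noteq> 0" using assms isI_0 by blast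
  have "nrm x \<noteq> 0" using nrm_eq_0_iff[OF isI_mem[OF assms(1) x(1)]] x(2) by simp
  then have "Gn I \<noteq> 0" using Gn_dvd[OF x(1)] by auto
  then show ?thesis using Gn_nonneg[of I] by simp
qed

lemma Gn_scale:
  assumes a: "\<alpha> \<in> Rg" and I: "I \<subseteq> Rg"
  shows "Gn ((\<lambda>x. \<alpha> * x) ` I) = \<bar>nrm \<alpha>\<bar> * Gn I"
proof -
  have "nrm ` ((\<lambda>x. \<alpha> * x) ` I) = (\<lambda>n. nrm \<alpha> * n) ` (nrm ` I)"
  proof -
    have "nrm ` ((\<lambda>x. \<alpha> * x) ` I) = (\<lambda>x. nrm (\<alpha> * x)) ` I" by (simp add: image_image)
    also have "\<dots> = (\<lambda>x. nrm \<alpha> * nrm x) ` I" using nrm_mult[OF a] I by (intro image_cong) auto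
    also have "\<dots> = (\<lambda>n. nrm \<alpha> * n) ` (nrm ` I)" by (simp add: image_image)
    finally show ?thesis .
  qed
  then have "Gn ((\<lambda>x. \<alpha> * x) ` I) = Gcd ((*) (nrm \<alpha>) ` (nrm ` I))" by (simp add: Gn_def)
  also have "\<dots> = normalize (nrm \<alpha> * Gcd (nrm ` I))" by (rule Gcd_mult)
  also have "\<dots> = \<bar>nrm \<alpha>\<bar> * Gn I" using Gn_nonneg[of I] by (simp add: Gn_def abs_mult)
  finally show ?thesis .
qed

lemma ideal_equiv_Gn:
  fixes F :: "int \<Rightarrow> int"
  assumes Fmult: "\<And>a b. a \<noteq> 0 \<Longrightarrow> b \<noteq> 0 \<Longrightarrow> F (a * b) = F a * F b"
    and Fnrm: "\<And>\<alpha>. \<alpha> \<in> Rg \<Longrightarrow> \<alpha> \<noteq> 0 \<Longrightarrow> F \<bar>nrm \<alpha>\<bar> = 1"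
    and Fnz: "\<And>a. a \<noteq> 0 \<Longrightarrow> F a \<noteq> 0"
    and E: "(I, J) \<in> ideal_equiv Rg"
  shows "F (Gn I) = F (Gn J)"
proof -
  from E obtain \<alpha> \<beta> where I: "isI I" "I \<noteq> {0}" and J: "isI J" "J \<noteq> {0}"
    and ab: "\<alpha> \<in> Rg" "\<beta> \<in> Rg" "\<alpha> \<noteq> 0" "\<beta> \<noteq> 0" "(\<lambda>x. \<alpha> * x) ` I = (\<lambda>x. \<beta> * x) ` J"
    unfolding ideal_equiv_def nonzero_ideals_def by blast
  have "\<bar>nrm \<alpha>\<bar> * Gn I = \<bar>nrm \<beta>\<bar> * Gn J"
    using Gn_scale[OF ab(1) isI_sub[OF I(1)]] Gn_scale[OF ab(2) isI_sub[OF J(1)]] ab(5) by simp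
  moreover have na: "\<bar>nrm \<alpha>\<bar> \<noteq> 0" using nrm_eq_0_iff[OF ab(1)] ab(3) by simp
  moreover have nb: "\<bar>nrm \<beta>\<bar> \<noteq> 0" using nrm_eq_0_iff[OF ab(2)] ab(4) by simp
  moreover have "Gn I \<noteq> 0" "Gn J \<noteq> 0" using Gn_pos I J by (auto simp: less_le)
  ultimately have "F \<bar>nrm \<alpha>\<bar> * F (Gn I) = F \<bar>nrm \<beta>\<bar> * F (Gn J)"
    using Fmult[of "\<bar>nrm \<alpha>\<bar>" "Gn I"] Fmult[of "\<bar>nrm \<beta>\<bar>" "Gn J"] by simp
  then show ?thesis using Fnrm ab by simp
qed

lemma image_mult_comp: "(\<lambda>x. a * x) ` ((\<lambda>x. b * x) ` S) = (\<lambda>x. (a * b) * x) ` (S :: complex set)"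
  by (auto simp: image_image mult.assoc)

lemma equiv_ideal: "equiv (nonzero_ideals Rg) (ideal_equiv Rg)"
proof (rule equivI)
  show "refl_on (nonzero_ideals Rg) (ideal_equiv Rg)"
  proof (unfold refl_on_def, intro conjI ballI)
    fix I assume I: "I \<in> nonzero_ideals Rg"
    have "(\<lambda>x. 1 * x) ` I = (\<lambda>x. 1 * x) ` I" ..
    then show "(I, I) \<in> ideal_equiv Rg"
      unfolding ideal_equiv_def using I Rg_1 by (intro CollectI case_prodI conjI bexI[of _ 1]) simp_all
  qed
  show "sym (ideal_equiv Rg)"
  proof (rule symI)
    fix I J assume "(I, J) \<in> ideal_equiv Rg"
    then obtain a b where ab: "a \<in> Rg" "b \<in> Rg" "a \<noteq> 0" "b \<noteq> 0" "(\<lambda>x. a * x) ` I = (\<lambda>x. b * x) ` J"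
      and I: "I \<in> nonzero_ideals Rg" and J: "J \<in> nonzero_ideals Rg" unfolding ideal_equiv_def by blast
    show "(J, I) \<in> ideal_equiv Rg"
      unfolding ideal_equiv_def using I J ab
      by (intro CollectI case_prodI conjI bexI[of _ b] bexI[of _ a]) simp_all
  qed
  show "trans (ideal_equiv Rg)"
  proof (rule transI)
    fix I J K assume IJ: "(I, J) \<in> ideal_equiv Rg" and JK: "(J, K) \<in> ideal_equiv Rg"
    from IJ obtain a b where ab: "a \<in> Rg" "b \<in> Rg" "a \<noteq> 0" "b \<noteq> 0" "(\<lambda>x. a * x) ` I = (\<lambda>x. b * x) ` J"
      and I: "I \<in> nonzero_ideals Rg" unfolding ideal_equiv_def by blast
    from JK obtain c d where cd: "c \<in> Rg" "d \<in> Rg" "c \<noteq> 0" "d \<noteq> 0" "(\<lambda>x. c * x) ` J = (\<lambda>x. d * x) ` K"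
      and K: "K \<in> nonzero_ideals Rg" unfolding ideal_equiv_def by blast
    have "(\<lambda>x. (c * a) * x) ` I = (\<lambda>x. c * x) ` ((\<lambda>x. a * x) ` I)" by (simp add: image_mult_comp)
    also have "\<dots> = (\<lambda>x. (c * b) * x) ` J" by (simp add: ab(5) image_mult_comp)
    also have "\<dots> = (\<lambda>x. b * x) ` ((\<lambda>x. c * x) ` J)" by (simp only: image_mult_comp mult.commute[of c b])
    also have "\<dots> = (\<lambda>x. (b * d) * x) ` K" by (simp add: cd(5) image_mult_comp)
    moreover have "c * a \<in> Rg" "b * d \<in> Rg" "c * a \<noteq> 0" "b * d \<noteq> 0"
      using ab cd by (auto intro!: Rg_mult)
    ultimately show "(I, K) \<in> ideal_equiv Rg"
      unfolding ideal_equiv_def using I K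
      by (intro CollectI case_prodI conjI bexI[of _ "c * a"] bexI[of _ "b * d"]) simp_all
  qed
qed (auto simp: ideal_equiv_def)

end

lemma int_subgroup_gen:
  fixes P :: "int \<Rightarrow> bool"
  assumes diff: "\<And>a b. P a \<Longrightarrow> P b \<Longrightarrow> P (a - b)"
    and mul: "\<And>a k. P a \<Longrightarrow> P (k * a)"
    and n1: "P n1" "n1 \<noteq> 0"
  shows "\<exists>n0>0. P n0 \<and> (\<forall>n. P n \<longrightarrow> n0 dvd n)"
proof -
  have "P \<bar>n1\<bar>"
  proof (cases "n1 \<ge> 0")
    case True then show ?thesis using n1 by simp
  next
    case False then show ?thesis using mul[OF n1(1), of "-1"] by simp
  qed
  then have ex: "\<exists>k::nat. k > 0 \<and> P (int k)" using n1(2)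
    by (intro exI[of _ "nat \<bar>n1\<bar>"]) simp
  define k0 where "k0 = (LEAST k::nat. k > 0 \<and> P (int k))"
  have k0: "k0 > 0 \<and> P (int k0)" unfolding k0_def by (rule LeastI_ex[OF ex])
  have mn: "\<not> (k > 0 \<and> P (int k))" if "k < k0" for k
    using not_less_Least[of k "\<lambda>k. k > 0 \<and> P (int k)"] that unfolding k0_def by blast
  have "\<forall>n. P n \<longrightarrow> int k0 dvd n"
  proof (intro allI impI)
    fix n assume Pn: "P n"
    define rm where "rm = n mod int k0"
    have "rm = n - (n div int k0) * int k0" by (simp add: rm_def mod_div_mult_eq minus_div_mult_eq_mod)
    then have Prm: "P rm" using diff[OF Pn mul[OF conjunct2[OF k0], of "n div int k0"]] by simp
    have r0: "0 \<le> rm" "rm < int k0" using k0 by (simp_all add: rm_def)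
    show "int k0 dvd n"
    proof (rule ccontr)
      assume "\<not> int k0 dvd n"
      then have "rm \<noteq> 0" by (simp add: rm_def dvd_eq_mod_eq_0)
      then have "nat rm > 0" "nat rm < k0" using r0 by auto
      moreover have "P (int (nat rm))" using Prm r0 by simp
      ultimately show False using mn by blast
    qed
  qed
  then show ?thesis using k0 by (intro exI[of _ "int k0"]) simp
qed

context qf
begin

lemma w_mult_el: "w * el A B = el (m * B) A"
proof -
  have "w * el A B = (of_int A * w + of_int B * (w * w)) / 2" by (simp add: el_def algebra_simps)
  also have "\<dots> = el (m * B) A" by (simp add: w_sq el_def algebra_simps)
  finally show ?thesis .
qed

lemma ideal_n0:
  assumes I: "isI I" "I \<noteq> {0}"
  shows "\<exists>n0>0. of_int n0 \<in> I \<and> (\<forall>n. of_int n \<in> I \<longrightarrow> n0 dvd n)"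
proof -
  obtain x where x: "x \<in> I" "x \<noteq> 0" using I isI_0 by blast
  have "nrm x \<noteq> 0" using nrm_eq_0_iff[OF isI_mem[OF I(1) x(1)]] x(2) by simp
  show ?thesis
  proof (rule int_subgroup_gen[of "\<lambda>n. of_int n \<in> I"])
    fix a b assume "of_int a \<in> I" "of_int b \<in> I"
    then show "(of_int (a - b) :: complex) \<in> I" using isI_diff[OF I(1)] by simp
  next
    fix a k assume "(of_int a :: complex) \<in> I"
    then show "(of_int (k * a) :: complex) \<in> I" using isI_mult_int[OF I(1)] by simp
  next
    show "(of_int (nrm x) :: complex) \<in> I" using isI_nrm[OF I(1) x(1)] .
  qed fact
qed

lemma ideal_b0:
  assumes I: "isI I" "I \<noteq> {0}" and n0: "of_int n0 \<in> I" "n0 > 0"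
  shows "\<exists>b0>0. (\<exists>A0. el A0 b0 \<in> I) \<and> (\<forall>y\<in>I. b0 dvd cB y)"
proof -
  have "w * of_int n0 \<in> I" using isI_mult[OF I(1) Rg_w n0(1)] .
  then have w0: "el 0 (2 * n0) \<in> I" by (simp add: of_int_el w_mult_el)
  have "\<exists>b0>0. (\<exists>A. el A b0 \<in> I) \<and> (\<forall>B. (\<exists>A. el A B \<in> I) \<longrightarrow> b0 dvd B)"
  proof (rule int_subgroup_gen[of "\<lambda>B. \<exists>A. el A B \<in> I"])
    fix a b assume "\<exists>A. el A a \<in> I" "\<exists>A. el A b \<in> I"
    then obtain A1 A2 where "el A1 a \<in> I" "el A2 b \<in> I" by blast
    then have "el A1 a - el A2 b \<in> I" using isI_diff[OF I(1)] by blast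
    then show "\<exists>A. el A (a - b) \<in> I" by (auto simp: el_diff)
  next
    fix a k assume "\<exists>A. el A a \<in> I"
    then obtain A1 where "el A1 a \<in> I" by blast
    then have "of_int k * el A1 a \<in> I" using isI_mult_int[OF I(1)] by blast
    then show "\<exists>A. el A (k * a) \<in> I" by (auto simp: of_int_mult_el)
  next
    show "\<exists>A. el A (2 * n0) \<in> I" using w0 by blast
    show "2 * n0 \<noteq> 0" using n0 by simp
  qed
  then obtain b0 where b0: "b0 > 0" "\<exists>A. el A b0 \<in> I" "\<forall>B. (\<exists>A. el A B \<in> I) \<longrightarrow> b0 dvd B" by blast
  have "\<forall>y\<in>I. b0 dvd cB y"
  proof
    fix y assume y: "y \<in> I"
    have "el (cA y) (cB y) \<in> I" using y Rg_coords[OF isI_mem[OF I(1) y]] by simp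
    then show "b0 dvd cB y" using b0(3) by blast
  qed
  then show ?thesis using b0 by blast
qed

lemma el_int_in_ideal:
  assumes I: "isI I" and e: "el X 0 \<in> I"
  shows "\<exists>T. X = 2 * T \<and> of_int T \<in> I"
proof -
  have "even X" using el_even_A[OF isI_mem[OF I e]] .
  then obtain T where T: "X = 2 * T" by blast
  then have "of_int T = el X 0" by (simp add: of_int_el)
  then show ?thesis using T e by auto
qed

lemma small_element:
  assumes I: "isI I" "I \<noteq> {0}"
  shows "\<exists>\<alpha>\<in>I. \<alpha> \<noteq> 0 \<and> real_of_int \<bar>nrm \<alpha>\<bar> \<le> 1 + 2 * r * real_of_int (Gn I)"
proof -
  obtain n0 where n0: "n0 > 0" "of_int n0 \<in> I" "\<forall>n. of_int n \<in> I \<longrightarrow> n0 dvd n"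
    using ideal_n0[OF I] by blast
  obtain b0 A0 where b0: "b0 > 0" "el A0 b0 \<in> I" "\<forall>y\<in>I. b0 dvd cB y"
    using ideal_b0[OF I n0(2) n0(1)] by blast
  define x0 where "x0 = el A0 b0"
  have x0I: "x0 \<in> I" using b0(2) by (simp add: x0_def)
  have "w * of_int n0 \<in> I" using isI_mult[OF I(1) Rg_w n0(2)] .
  then have "el 0 (2 * n0) \<in> I" by (simp add: of_int_el w_mult_el)
  then have "b0 dvd cB (el 0 (2 * n0))" using b0(3) by blast
  then have "b0 dvd 2 * n0" by simp
  then obtain e' where e': "2 * n0 = b0 * e'" by blast
  have wx0: "w * x0 \<in> I" using isI_mult[OF I(1) Rg_w x0I] .
  then have "b0 dvd cB (w * x0)" using b0(3) by blast
  then have "b0 dvd A0" by (simp add: x0_def w_mult_el)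
  then obtain a1 where a1: "A0 = b0 * a1" by blast
  have "w * x0 - of_int a1 * x0 \<in> I" using isI_diff[OF I(1) wx0 isI_mult_int[OF I(1) x0I]] .
  then have "el (m * b0 - a1 * A0) 0 \<in> I" by (simp add: x0_def w_mult_el of_int_mult_el el_diff a1)
  then obtain T where T: "m * b0 - a1 * A0 = 2 * T" "of_int T \<in> I" using el_int_in_ideal[OF I(1)] by blast
  obtain t' where t': "T = n0 * t'" using n0(3) T(2) by blast
  have mb0: "m * b0 = a1 * A0 + 2 * n0 * t'" using T(1) t' by simp
  have key: "n0 * b0 dvd 2 * nrm y" if y: "y \<in> I" for y
  proof -
    obtain u where u: "cB y = b0 * u" using b0(3) y by blast
    have "y - of_int u * x0 \<in> I" using isI_diff[OF I(1) y isI_mult_int[OF I(1) x0I]] .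
    moreover have "y - of_int u * x0 = el (cA y - u * A0) 0"
    proof -
      define Ay where "Ay = cA y"
      have hy: "y = el Ay (b0 * u)" using Rg_coords[OF isI_mem[OF I(1) y]] u by (simp add: Ay_def)
      show ?thesis unfolding Ay_def[symmetric] unfolding hy x0_def of_int_mult_el el_diff
        by (simp add: mult.commute)
    qed
    ultimately have "el (cA y - u * A0) 0 \<in> I" by simp
    then obtain T' where T': "cA y - u * A0 = 2 * T'" "of_int T' \<in> I" using el_int_in_ideal[OF I(1)] by blast
    obtain v where v: "T' = n0 * v" using n0(3) T'(2) by blast
    have Y1: "cA y = u * A0 + 2 * n0 * v" using T'(1) v by simp
    have "4 * nrm y = cA y ^ 2 - m * cB y ^ 2" using nrm4[OF isI_mem[OF I(1) y]] .
    also have "\<dots> = u^2 * (A0 * A0 - b0 * (m * b0)) + 4 * u * v * A0 * n0 + 2 * v^2 * n0 * (2 * n0)"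
      by (simp add: Y1 u power2_eq_square algebra_simps)
    also have "\<dots> = u^2 * (- 2 * n0 * b0 * t') + 4 * u * v * (b0 * a1) * n0 + 2 * v^2 * n0 * (b0 * e')"
    proof -
      have S1: "A0 * A0 - b0 * (m * b0) = - 2 * n0 * b0 * t'" unfolding mb0 by (simp add: a1 algebra_simps)
      show ?thesis unfolding S1 a1[symmetric] e'[symmetric] by simp
    qed
    also have "\<dots> = 2 * (n0 * b0) * (2 * u * v * a1 - u^2 * t' + v^2 * e')"
      by (simp add: power2_eq_square algebra_simps)
    finally have "2 * nrm y = (n0 * b0) * (2 * u * v * a1 - u^2 * t' + v^2 * e')" by simp
    then show ?thesis by simp
  qed
  have "n0 * b0 dvd Gn I * 2"
  proof -
    have "n0 * b0 dvd Gn I * 2" if True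
    proof -
      have "\<forall>y\<in>I. n0 * b0 dvd nrm y * 2" using key by (simp add: mult.commute)
      then have "n0 * b0 dvd Gcd ((\<lambda>y. nrm y * 2) ` I)" by (intro Gcd_greatest) auto
      also have "(\<lambda>y. nrm y * 2) ` I = (*) 2 ` (nrm ` I)" by (auto simp: image_image mult.commute)
      also have "Gcd \<dots> = normalize (2 * Gcd (nrm ` I))" by (rule Gcd_mult)
      also have "\<dots> = Gn I * 2" using Gn_nonneg[of I] by (simp add: Gn_def abs_mult)
      finally show ?thesis .
    qed
    then show ?thesis by simp
  qed
  moreover have G0: "Gn I > 0" using Gn_pos[OF I] .
  ultimately have "n0 * b0 \<le> Gn I * 2" by (intro zdvd_imp_le) auto
  then have nb_le: "n0 * b0 \<le> 2 * Gn I" by simp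
  define \<theta> where "\<theta> = (of_int A0 - of_int b0 * r) / (2 * of_int n0)"
  have nn0: "nat n0 > 0" using n0(1) by simp
  obtain h k where hk: "0 < k" "k \<le> int (nat n0)" "\<bar>of_int k * \<theta> - of_int h\<bar> < 1 / real (nat n0)"
    using Dirichlet_approx[OF nn0, of \<theta>] by blast
  have kn0: "k \<le> n0" using hk(2) n0(1) by simp
  define X where "X = k * A0 - 2 * h * n0"
  define Y where "Y = k * b0"
  define \<alpha> where "\<alpha> = of_int k * x0 - of_int (h * n0)"
  have \<alpha>I: "\<alpha> \<in> I" unfolding \<alpha>_def
    using isI_diff[OF I(1) isI_mult_int[OF I(1) x0I] isI_mult_int[OF I(1) n0(2), of h]] by simp
  have \<alpha>el: "\<alpha> = el X Y"
    by (simp only: \<alpha>_def x0_def of_int_mult_el of_int_el[of "h * n0"] el_diff) (simp add: X_def Y_def algebra_simps)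
  have Y0: "Y > 0" using hk(1) b0(1) by (simp add: Y_def)
  have \<alpha>0: "\<alpha> \<noteq> 0" using Y0 by (simp add: \<alpha>el el_eq_0_iff)
  have \<alpha>R: "\<alpha> \<in> Rg" using isI_mem[OF I(1) \<alpha>I] .
  have d4: "4 dvd (X^2 - m * Y^2)" using Rg_dvd4[OF \<alpha>R] by (simp add: \<alpha>el)
  have nrm\<alpha>: "real_of_int (nrm \<alpha>) = ((of_int X + of_int Y * r) / 2) * ((of_int X - of_int Y * r) / 2)"
  proof -
    obtain N where N: "X^2 - m * Y^2 = 4 * N" using d4 by blast
    have "nrm \<alpha> = N" by (simp add: \<alpha>el nrm_def N)
    moreover have "real_of_int (X^2 - m * Y^2) = real_of_int (4 * N)" using N by simp
    ultimately show ?thesis using r_sq by (simp add: power2_eq_square algebra_simps)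
  qed
  have small: "\<bar>(of_int X - of_int Y * r) / 2\<bar> < 1"
  proof -
    have "(of_int X - of_int Y * r) / 2 = of_int n0 * (of_int k * \<theta> - of_int h)"
      using n0(1) by (simp add: X_def Y_def \<theta>_def field_simps)
    then have "\<bar>(of_int X - of_int Y * r) / 2\<bar> = of_int n0 * \<bar>of_int k * \<theta> - of_int h\<bar>"
      using n0(1) by (simp add: abs_mult)
    also have "\<dots> < of_int n0 * (1 / real (nat n0))"
      using hk(3) n0(1) by (intro mult_strict_left_mono) auto
    also have "\<dots> = 1" using n0(1) by simp
    finally show ?thesis .
  qed
  have big: "\<bar>(of_int X + of_int Y * r) / 2\<bar> \<le> 1 + 2 * r * real_of_int (Gn I)"
  proof -
    have "(of_int X + of_int Y * r) / 2 = (of_int X - of_int Y * r) / 2 + of_int Y * r" by (simp add: field_simps)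
    moreover have "\<bar>(of_int X - of_int Y * r) / 2 + of_int Y * r\<bar> \<le> \<bar>(of_int X - of_int Y * r) / 2\<bar> + \<bar>of_int Y * r\<bar>"
      by (rule abs_triangle_ineq)
    moreover have "\<bar>of_int Y * r\<bar> = of_int Y * r" using Y0 r_pos by simp
    ultimately have "\<bar>(of_int X + of_int Y * r) / 2\<bar> \<le> \<bar>(of_int X - of_int Y * r) / 2\<bar> + of_int Y * r"
      by simp
    also have "\<dots> \<le> 1 + of_int Y * r" using small by simp
    also have "of_int Y \<le> real_of_int (2 * Gn I)"
    proof -
      have "Y \<le> n0 * b0" using kn0 b0(1) by (simp add: Y_def)
      then show ?thesis using nb_le by linarith
    qed
    then have "1 + of_int Y * r \<le> 1 + 2 * r * real_of_int (Gn I)" using r_pos by (simp add: mult_right_mono)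
    finally show ?thesis .
  qed
  have "real_of_int \<bar>nrm \<alpha>\<bar> = \<bar>real_of_int (nrm \<alpha>)\<bar>" by simp
  also have "\<dots> = \<bar>((of_int X + of_int Y * r) / 2) * ((of_int X - of_int Y * r) / 2)\<bar>"
    by (simp only: nrm\<alpha>)
  also have "\<dots> = \<bar>(of_int X + of_int Y * r) / 2\<bar> * \<bar>(of_int X - of_int Y * r) / 2\<bar>"
    by (rule abs_mult)
  also have "\<dots> \<le> (1 + 2 * r * real_of_int (Gn I)) * 1"
    using big small by (intro mult_mono) auto
  finally show ?thesis using \<alpha>I \<alpha>0 by auto
qed

end

context qf
begin

lemma reduce_ideal:
  assumes I: "isI I" "I \<noteq> {0}"
  shows "\<exists>J. (I, J) \<in> ideal_equiv Rg \<and> isI J \<and> J \<noteq> {0} \<and> real_of_int (Gn J) \<le> 1 + 2 * r"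
proof -
  obtain \<alpha> where \<alpha>I: "\<alpha> \<in> I" and \<alpha>0: "\<alpha> \<noteq> 0" and \<alpha>b: "real_of_int \<bar>nrm \<alpha>\<bar> \<le> 1 + 2 * r * real_of_int (Gn I)"
    using small_element[OF I] by blast
  define G where "G = Gn I"
  have G0: "G > 0" using Gn_pos[OF I] by (simp add: G_def)
  have \<alpha>R: "\<alpha> \<in> Rg" using isI_mem[OF I(1) \<alpha>I] .
  define \<beta> where "\<beta> = cnj \<alpha>"
  have \<beta>R: "\<beta> \<in> Rg" using cnj_Rg[OF \<alpha>R] by (simp add: \<beta>_def)
  have n\<beta>: "nrm \<beta> = nrm \<alpha>" by (simp add: \<beta>_def)
  have \<beta>0: "\<beta> \<noteq> 0" using nrm_eq_0_iff[OF \<beta>R] nrm_eq_0_iff[OF \<alpha>R] \<alpha>0 n\<beta> by simp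
  define f where "f = (\<lambda>x. \<beta> * x / of_int G)"
  define J where "J = f ` I"
  have fR: "f x \<in> Rg" if x: "x \<in> I" for x
  proof -
    have xR: "x \<in> Rg" using isI_mem[OF I(1) x] .
    have zR: "x * \<beta> \<in> Rg" using Rg_mult[OF xR \<beta>R] .
    have "nrm (x + \<alpha>) = nrm x + nrm \<alpha> + cA (x * \<beta>)"
      using nrm_add[OF xR \<alpha>R] by (simp add: \<beta>_def)
    then have "cA (x * \<beta>) = nrm (x + \<alpha>) - nrm x - nrm \<alpha>" by simp
    moreover have "G dvd nrm (x + \<alpha>)" "G dvd nrm x" "G dvd nrm \<alpha>"
      using Gn_dvd[of _ I] isI_add[OF I(1) x \<alpha>I] x \<alpha>I by (auto simp: G_def)
    ultimately have dA: "G dvd cA (x * \<beta>)" by simp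
    have "nrm (x * \<beta>) = nrm x * nrm \<alpha>" using nrm_mult[OF xR \<beta>R] n\<beta> by simp
    then have dN: "G^2 dvd nrm (x * \<beta>)"
      using \<open>G dvd nrm x\<close> \<open>G dvd nrm \<alpha>\<close> by (simp add: power2_eq_square mult_dvd_mono)
    have "x * \<beta> / of_int G \<in> Rg" using Rg_div[OF zR G0 dA dN] .
    then show ?thesis by (simp add: f_def mult.commute)
  qed
  have f_add: "f x + f y = f (x + y)" for x y by (simp add: f_def add_divide_distrib algebra_simps)
  have f_diff: "f x - f y = f (x - y)" for x y by (simp add: f_def diff_divide_distrib algebra_simps)
  have f_mult: "c * f x = f (c * x)" for c x by (simp add: f_def)
  have JI: "isI J"
    unfolding is_ideal_in_def
  proof (intro conjI ballI)
    show "J \<subseteq> Rg" using fR by (auto simp: J_def)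
    have "f 0 = 0" by (simp add: f_def)
    then show "0 \<in> J" unfolding J_def by (rule image_eqI[of _ f 0, OF sym]) (rule isI_0[OF I(1)])
  next
    fix x y assume "x \<in> J" "y \<in> J"
    then obtain a b where a: "a \<in> I" "x = f a" and b: "b \<in> I" "y = f b" by (auto simp: J_def)
    show "x + y \<in> J" using isI_add[OF I(1) a(1) b(1)] unfolding J_def a(2) b(2) f_add by blast
    show "x - y \<in> J" using isI_diff[OF I(1) a(1) b(1)] unfolding J_def a(2) b(2) f_diff by blast
  next
    fix c x assume c: "c \<in> Rg" and "x \<in> J"
    then obtain a where a: "a \<in> I" "x = f a" by (auto simp: J_def)
    show "c * x \<in> J" using isI_mult[OF I(1) c a(1)] unfolding J_def a(2) f_mult by blast
  qed
  have J0: "J \<noteq> {0}"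
  proof -
    obtain x where x: "x \<in> I" "x \<noteq> 0" using I isI_0 by blast
    have "f x \<noteq> 0" using x(2) \<beta>0 G0 by (simp add: f_def)
    then show ?thesis using x(1) unfolding J_def by blast
  qed
  have img: "(\<lambda>x. \<beta> * x) ` I = (\<lambda>y. of_int G * y) ` J"
  proof -
    have "(\<lambda>y. of_int G * y) ` J = (\<lambda>x. of_int G * f x) ` I" by (simp add: J_def image_image)
    also have "\<dots> = (\<lambda>x. \<beta> * x) ` I" using G0 by (simp add: f_def)
    finally show ?thesis by simp
  qed
  have equivIJ: "(I, J) \<in> ideal_equiv Rg"
    unfolding ideal_equiv_def nonzero_ideals_def
    using I JI J0 \<beta>R \<beta>0 img G0 Rg_of_int[of G]
    by (intro CollectI case_prodI conjI bexI[of _ \<beta>] bexI[of _ "of_int G"]) simp_all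
  have "Gn ((\<lambda>x. \<beta> * x) ` I) = \<bar>nrm \<alpha>\<bar> * G"
    using Gn_scale[OF \<beta>R isI_sub[OF I(1)]] n\<beta> by (simp add: G_def)
  moreover have "Gn ((\<lambda>y. of_int G * y) ` J) = G^2 * Gn J"
    using Gn_scale[OF Rg_of_int[of G] isI_sub[OF JI]] by simp
  ultimately have "G^2 * Gn J = \<bar>nrm \<alpha>\<bar> * G" using img by simp
  then have GJ: "G * Gn J = \<bar>nrm \<alpha>\<bar>" using G0 by (simp add: power2_eq_square)
  have "real_of_int (G * Gn J) = real_of_int \<bar>nrm \<alpha>\<bar>" using GJ by simp
  then have "real_of_int G * real_of_int (Gn J) \<le> 1 + 2 * r * real_of_int G"
    using \<alpha>b unfolding G_def[symmetric] by simp
  then have "real_of_int (Gn J) \<le> 1 / real_of_int G + 2 * r"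
    using G0 by (simp add: field_simps)
  also have "1 / real_of_int G \<le> 1" using G0 by simp
  finally have "real_of_int (Gn J) \<le> 1 + 2 * r" by simp
  then show ?thesis using equivIJ JI J0 by blast
qed

definition red :: "int \<Rightarrow> complex \<Rightarrow> complex" where
  "red n x = el (cA x mod (2 * n)) (cB x mod (2 * n))"

definition Tset :: "int \<Rightarrow> complex set" where
  "Tset n = (\<lambda>(a, b). el a b) ` ({0..<2 * n} \<times> {0..<2 * n})"

lemma finite_Tset: "finite (Tset n)"
  unfolding Tset_def by simp

lemma red_in_T: "n > 0 \<Longrightarrow> red n x \<in> Tset n"
  unfolding red_def Tset_def by (auto intro!: image_eqI[of _ _ "(cA x mod (2 * n), cB x mod (2 * n))"])

lemma red_diff:
  assumes x: "x \<in> Rg"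
  shows "x - red n x = of_int n * el (2 * (cA x div (2 * n))) (2 * (cB x div (2 * n)))"
proof -
  define Ax where "Ax = cA x"
  define Bx where "Bx = cB x"
  have hx: "x = el Ax Bx" using Rg_coords[OF x] by (simp add: Ax_def Bx_def)
  have "x - red n x = el Ax Bx - el (Ax mod (2 * n)) (Bx mod (2 * n))"
    unfolding red_def Ax_def[symmetric] Bx_def[symmetric] using hx by simp
  also have "\<dots> = el (Ax - Ax mod (2 * n)) (Bx - Bx mod (2 * n))" by (rule el_diff)
  also have "\<dots> = el (2 * n * (Ax div (2 * n))) (2 * n * (Bx div (2 * n)))"
    by (simp add: minus_mod_eq_mult_div)
  finally have "x - red n x = el (2 * n * (cA x div (2 * n))) (2 * n * (cB x div (2 * n)))"
    by (simp add: Ax_def Bx_def)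
  also have "\<dots> = of_int n * el (2 * (cA x div (2 * n))) (2 * (cB x div (2 * n)))"
  proof -
    have e1: "2 * n * (cA x div (2 * n)) = n * (2 * (cA x div (2 * n)))" by (simp add: algebra_simps)
    have e2: "2 * n * (cB x div (2 * n)) = n * (2 * (cB x div (2 * n)))" by (simp add: algebra_simps)
    show ?thesis by (simp only: of_int_mult_el e1 e2)
  qed
  finally show ?thesis .
qed

lemma el_even_Rg: "el (2 * a) (2 * b) \<in> Rg"
  by (rule Rg_el) (simp add: power2_eq_square algebra_simps)

lemma ideal_red:
  assumes J: "isI J" and n0: "of_int n0 \<in> J" and x: "x \<in> Rg"
  shows "x \<in> J \<longleftrightarrow> red n0 x \<in> J"
proof -
  have "x - red n0 x \<in> J"
    unfolding red_diff[OF x] using isI_mult[OF J el_even_Rg[of "cA x div (2 * n0)" "cB x div (2 * n0)"] n0]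
    by (simp add: mult.commute)
  show ?thesis
  proof
    assume "x \<in> J"
    from isI_diff[OF J this \<open>x - red n0 x \<in> J\<close>] show "red n0 x \<in> J" by simp
  next
    assume "red n0 x \<in> J"
    from isI_add[OF J this \<open>x - red n0 x \<in> J\<close>] show "x \<in> J" by simp
  qed
qed

lemma small_ideals_finite:
  fixes C :: int
  shows "finite {J. isI J \<and> J \<noteq> {0} \<and> Gn J \<le> C}"
proof -
  define F where "F = (\<lambda>(n, S). {x \<in> Rg. red n x \<in> S}) ` (SIGMA n:{1..C}. Pow (Tset n))"
  have "finite F" unfolding F_def by (intro finite_imageI finite_SigmaI) (auto simp: finite_Tset)
  moreover have "{J. isI J \<and> J \<noteq> {0} \<and> Gn J \<le> C} \<subseteq> F"
  proof
    fix J assume "J \<in> {J. isI J \<and> J \<noteq> {0} \<and> Gn J \<le> C}"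
    then have J: "isI J" "J \<noteq> {0}" "Gn J \<le> C" by auto
    obtain n0 where n0: "n0 > 0" "of_int n0 \<in> J" "\<forall>n. of_int n \<in> J \<longrightarrow> n0 dvd n"
      using ideal_n0[OF J(1,2)] by blast
    have "n0 dvd Gn J" using n0(3) isI_nrm[OF J(1)] by (intro dvd_Gn) blast
    then have "n0 \<le> Gn J" using Gn_pos[OF J(1,2)] by (intro zdvd_imp_le)
    then have n0C: "n0 \<in> {1..C}" using n0(1) J(3) by simp
    have "J = {x \<in> Rg. red n0 x \<in> J \<inter> Tset n0}"
    proof
      show "J \<subseteq> {x \<in> Rg. red n0 x \<in> J \<inter> Tset n0}"
      proof
        fix x assume xJ: "x \<in> J"
        have xR: "x \<in> Rg" using isI_mem[OF J(1) xJ] .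
        show "x \<in> {x \<in> Rg. red n0 x \<in> J \<inter> Tset n0}"
          using xJ xR ideal_red[OF J(1) n0(2) xR] red_in_T[OF n0(1), of x] by simp
      qed
      show "{x \<in> Rg. red n0 x \<in> J \<inter> Tset n0} \<subseteq> J"
      proof
        fix x assume "x \<in> {x \<in> Rg. red n0 x \<in> J \<inter> Tset n0}"
        then have xR: "x \<in> Rg" and "red n0 x \<in> J" by auto
        then show "x \<in> J" using ideal_red[OF J(1) n0(2) xR] by simp
      qed
    qed
    then show "J \<in> F" unfolding F_def using n0C
      by (intro image_eqI[of _ _ "(n0, J \<inter> Tset n0)"]) auto
  qed
  ultimately show ?thesis by (rule finite_subset[rotated])
qed

theorem finite_classes: "finite (nonzero_ideals Rg // ideal_equiv Rg)"
proof -
  define C where "C = \<lfloor>1 + 2 * r\<rfloor>"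
  define S where "S = {J. isI J \<and> J \<noteq> {0} \<and> Gn J \<le> C}"
  have "nonzero_ideals Rg // ideal_equiv Rg \<subseteq> (\<lambda>J. ideal_equiv Rg `` {J}) ` S"
  proof
    fix X assume "X \<in> nonzero_ideals Rg // ideal_equiv Rg"
    then obtain I where I: "I \<in> nonzero_ideals Rg" and X: "X = ideal_equiv Rg `` {I}"
      by (auto elim: quotientE)
    have I': "isI I" "I \<noteq> {0}" using I by (auto simp: nonzero_ideals_def)
    obtain J where J: "(I, J) \<in> ideal_equiv Rg" "isI J" "J \<noteq> {0}" "real_of_int (Gn J) \<le> 1 + 2 * r"
      using reduce_ideal[OF I'] by blast
    have "Gn J \<le> C" using J(4) unfolding C_def by linarith
    then have "J \<in> S" using J by (simp add: S_def)
    moreover have "X = ideal_equiv Rg `` {J}" using X equiv_class_eq[OF equiv_ideal J(1)] by simp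
    ultimately show "X \<in> (\<lambda>J. ideal_equiv Rg `` {J}) ` S" by blast
  qed
  moreover have "finite S" unfolding S_def by (rule small_ideals_finite)
  ultimately show ?thesis by (rule finite_surj[rotated])
qed

end

lemma Legendre_cong:
  assumes "[a = b] (mod p)"
  shows "Legendre a p = Legendre b p"
proof -
  have ab: "[a = b] (mod p)" using assms .
  have ba: "[b = a] (mod p)" using assms by (rule cong_sym)
  have z: "[a = 0] (mod p) \<longleftrightarrow> [b = 0] (mod p)" using cong_trans[OF ba] cong_trans[OF ab] by blast
  have q: "QuadRes p a \<longleftrightarrow> QuadRes p b" unfolding QuadRes_def
    using cong_trans[OF _ ab] cong_trans[OF _ ba] by blast
  show ?thesis unfolding Legendre_def using z q by simp
qed

lemma Legendre_sq:
  assumes p: "prime (p::int)" and a: "\<not> p dvd a"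
  shows "Legendre (a^2) p = 1"
proof -
  have "\<not> [a^2 = 0] (mod p)"
  proof
    assume "[a^2 = 0] (mod p)"
    then have "p dvd a^2" by (simp add: cong_0_iff)
    then have "p dvd a" using p prime_dvd_power by blast
    then show False using a by simp
  qed
  moreover have "QuadRes p (a^2)" unfolding QuadRes_def by (intro exI[of _ a]) simp
  ultimately show ?thesis by (simp add: Legendre_def)
qed

lemma Legendre_one: assumes "prime (p::int)" shows "Legendre 1 p = 1"
proof -
  have "\<not> p dvd 1" using assms not_prime_unit by blast
  then show ?thesis using Legendre_sq[OF assms, of 1] by simp
qed

lemma Legendre_range: "Legendre a p \<in> {-1, 0, 1}"
  by (simp add: Legendre_def)

lemma Legendre_nz:
  assumes p: "prime (p::int)" and a: "\<not> p dvd a"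
  shows "Legendre a p = 1 \<or> Legendre a p = -1"
proof -
  have "\<not> [a = 0] (mod p)" using a by (simp add: cong_0_iff)
  then show ?thesis by (simp add: Legendre_def)
qed

lemma cong_small:
  fixes x y p :: int
  assumes "x \<in> {-1, 0, 1}" "y \<in> {-1, 0, 1}" "p > 2" "[x = y] (mod p)"
  shows "x = y"
proof (rule ccontr)
  assume ne: "x \<noteq> y"
  have d: "p dvd (x - y)" using assms(4) by (simp add: cong_iff_dvd_diff)
  have "x - y \<in> {-2, -1, 1, 2}" using assms(1,2) ne by auto
  then have "p dvd 1 \<or> p dvd 2" using d by auto
  then have "p \<le> 2" by (auto dest: zdvd_imp_le)
  then show False using assms(3) by simp
qed

lemma Legendre_mult:
  assumes p: "prime (p::int)" "p > 2"
  shows "Legendre (a * b) p = Legendre a p * Legendre b p"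
proof -
  define n where "n = nat p"
  have pn: "p = int n" using p(2) by (simp add: n_def)
  have n1: "prime n" using p(1) unfolding pn by simp
  have n2: "2 < n" using p(2) unfolding pn by simp
  define e where "e = (n - 1) div 2"
  have c1: "[Legendre (a * b) p = (a * b) ^ e] (mod p)"
    unfolding pn e_def by (rule euler_criterion[OF n1 n2])
  have c2: "[Legendre a p = a ^ e] (mod p)"
    unfolding pn e_def by (rule euler_criterion[OF n1 n2])
  have c3: "[Legendre b p = b ^ e] (mod p)"
    unfolding pn e_def by (rule euler_criterion[OF n1 n2])
  have "[Legendre a p * Legendre b p = a ^ e * b ^ e] (mod p)" using cong_mult[OF c2 c3] .
  then have c4: "[a ^ e * b ^ e = Legendre a p * Legendre b p] (mod p)" by (rule cong_sym)
  have c5: "[(a * b) ^ e = Legendre a p * Legendre b p] (mod p)" using c4 by (simp only: power_mult_distrib)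
  have c6: "[Legendre (a * b) p = Legendre a p * Legendre b p] (mod p)" by (rule cong_trans[OF c1 c5])
  have r2: "Legendre a p * Legendre b p \<in> {-1, 0, 1}"
    using Legendre_range[of a p] Legendre_range[of b p] by auto
  show ?thesis by (rule cong_small[OF Legendre_range r2 p(2) c6])
qed

lemma Legendre_nonres_exists:
  assumes p: "prime (p::int)" "p > 2"
  shows "\<exists>a. 0 < a \<and> a < p \<and> Legendre a p = -1"
proof -
  define S where "S = {1..p - 1}"
  define f where "f = (\<lambda>y. y^2 mod p)"
  have fS: "f ` S \<subseteq> S"
  proof
    fix z assume "z \<in> f ` S"
    then obtain y where y: "y \<in> S" "z = y^2 mod p" by (auto simp: f_def)
    have "\<not> p dvd y" using y(1) by (auto simp: S_def zdvd_not_zless)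
    then have "\<not> p dvd y^2" using p(1) prime_dvd_power by blast
    then have "y^2 mod p \<noteq> 0" by (simp add: dvd_eq_mod_eq_0)
    moreover have "0 \<le> y^2 mod p" "y^2 mod p < p" using p by auto
    ultimately have "1 \<le> y^2 mod p" "y^2 mod p \<le> p - 1" by linarith+
    then show "z \<in> S" using y by (simp add: S_def)
  qed
  have "\<not> inj_on f S"
  proof
    assume inj: "inj_on f S"
    have "1 \<in> S" "p - 1 \<in> S" using p by (auto simp: S_def)
    moreover have "f 1 = f (p - 1)"
    proof -
      have "(p - 1)^2 = 1 + p * (p - 2)" by (simp add: power2_eq_square algebra_simps)
      then have "(p - 1)^2 mod p = 1 mod p" by simp
      then show ?thesis by (simp add: f_def)
    qed
    ultimately have "1 = p - 1" using inj by (meson inj_onD)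
    then show False using p by simp
  qed
  moreover have "finite S" by (simp add: S_def)
  ultimately have "card (f ` S) \<noteq> card S" using inj_on_iff_eq_card[of S f] by simp
  moreover have "card (f ` S) \<le> card S" using card_image_le[OF \<open>finite S\<close>] .
  ultimately have "card (f ` S) < card S" by simp
  then have "f ` S \<noteq> S" by auto
  then obtain a where a: "a \<in> S" "a \<notin> f ` S" using fS by blast
  have nz: "\<not> [a = 0] (mod p)"
  proof
    assume "[a = 0] (mod p)"
    then have "p dvd a" by (simp add: cong_0_iff)
    then show False using a(1) by (auto simp: S_def zdvd_not_zless)
  qed
  have nq: "\<not> QuadRes p a"
  proof
    assume "QuadRes p a"
    then obtain y where y: "[y^2 = a] (mod p)" by (auto simp: QuadRes_def)
    define y' where "y' = y mod p"
    have "[y'^2 = y^2] (mod p)" unfolding y'_def by (intro cong_pow) (simp add: Cong.cong_def)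
    then have c: "[y'^2 = a] (mod p)" using y cong_trans by blast
    have "a mod p = a" using a(1) by (auto simp: S_def)
    moreover have "y'^2 mod p = a mod p" using c by (simp add: Cong.cong_def)
    ultimately have fy: "f y' = a" by (simp add: f_def)
    have "y' \<noteq> 0"
    proof
      assume "y' = 0"
      then have "[0 = a] (mod p)" using c by (simp add: power2_eq_square)
      then show False using nz cong_sym by blast
    qed
    moreover have "0 \<le> y'" "y' < p" using p by (simp_all add: y'_def)
    ultimately have "y' \<in> S" by (simp add: S_def)
    then show False using a(2) fy by blast
  qed
  have "Legendre a p = -1" using nz nq by (simp add: Legendre_def)
  then show ?thesis using a(1) by (intro exI[of _ a]) (auto simp: S_def)
qed


definition psi :: "int \<Rightarrow> int \<Rightarrow> int \<Rightarrow> int" where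
  "psi q w n = Legendre (n div q ^ multiplicity q n) q * Legendre (- w) q ^ multiplicity q n"

locale psi_setup =
  fixes q w :: int
  assumes q_prime: "prime q" and q_gt2: "q > 2" and q_ndvd_w: "\<not> q dvd w"
begin

lemma q_pe: "prime_elem q" using q_prime by (rule prime_imp_prime_elem)
lemma q_nu: "\<not> is_unit q" using q_prime not_prime_unit by blast

lemma psi_nd: "\<not> q dvd n \<Longrightarrow> psi q w n = Legendre n q"
  by (simp add: psi_def not_dvd_imp_multiplicity_0)

lemma Lw: "Legendre (- w) q = 1 \<or> Legendre (- w) q = -1"
  using Legendre_nz[OF q_prime, of "- w"] q_ndvd_w by simp

lemma Lw_sq: "Legendre (- w) q ^ 2 = 1"
  using Lw by auto

lemma decomp:
  assumes "n \<noteq> 0"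
  shows "n = q ^ multiplicity q n * (n div q ^ multiplicity q n)" "\<not> q dvd (n div q ^ multiplicity q n)"
proof -
  show "n = q ^ multiplicity q n * (n div q ^ multiplicity q n)"
    using multiplicity_dvd[of q n] by simp
  show "\<not> q dvd (n div q ^ multiplicity q n)"
    using multiplicity_decompose[of n q] assms q_nu by simp
qed

lemma psi_mult:
  assumes n: "n \<noteq> 0" and k: "k \<noteq> 0"
  shows "psi q w (n * k) = psi q w n * psi q w k"
proof -
  define a where "a = multiplicity q n"
  define b where "b = multiplicity q k"
  define n' where "n' = n div q ^ a"
  define k' where "k' = k div q ^ b"
  have nd: "n = q ^ a * n'" using decomp(1)[OF n] by (simp add: a_def n'_def)
  have kd: "k = q ^ b * k'" using decomp(1)[OF k] by (simp add: b_def k'_def)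
  have mnk: "multiplicity q (n * k) = a + b"
    using prime_elem_multiplicity_mult_distrib[OF q_pe n k] by (simp add: a_def b_def)
  have q0: "q ^ (a + b) \<noteq> 0" using q_gt2 by simp
  have "(n * k) div q ^ (a + b) = (q ^ (a + b) * (n' * k')) div q ^ (a + b)"
    by (simp add: nd kd power_add algebra_simps)
  also have "\<dots> = n' * k'" using q0 by simp
  finally have dv: "(n * k) div q ^ (a + b) = n' * k'" .
  show ?thesis
    unfolding psi_def mnk dv a_def[symmetric] b_def[symmetric] n'_def[symmetric] k'_def[symmetric]
    by (simp add: Legendre_mult[OF q_prime q_gt2] power_add algebra_simps)
qed

lemma psi_q: "psi q w q = Legendre (- w) q"
proof -
  have "multiplicity q q = 1" using q_gt2 q_nu by (simp add: multiplicity_self)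
  then show ?thesis using q_gt2 by (simp add: psi_def Legendre_one[OF q_prime])
qed

lemma psi_pm:
  assumes "n \<noteq> 0" shows "psi q w n = 1 \<or> psi q w n = -1"
proof -
  have "Legendre (n div q ^ multiplicity q n) q = 1 \<or> Legendre (n div q ^ multiplicity q n) q = -1"
    using Legendre_nz[OF q_prime] decomp(2)[OF assms] by blast
  moreover have "Legendre (- w) q ^ multiplicity q n = 1 \<or> Legendre (- w) q ^ multiplicity q n = -1"
  proof -
    have pw: "(x::int) = 1 \<or> x = -1 \<Longrightarrow> x ^ k = 1 \<or> x ^ k = -1" for x k
      by (induct k) auto
    show ?thesis by (rule pw[OF Lw])
  qed
  ultimately show ?thesis unfolding psi_def by auto
qed

lemma psi_sq_mult:
  assumes "n \<noteq> 0" "c \<noteq> 0" "\<not> q dvd c"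
  shows "psi q w (c^2 * n) = psi q w n"
proof -
  have "psi q w (c^2) = Legendre (c^2) q" using assms(3) q_prime psi_nd prime_dvd_power by blast
  also have "\<dots> = 1" using Legendre_sq[OF q_prime assms(3)] .
  finally show ?thesis using psi_mult[of "c^2" n] assms by simp
qed

lemma psi_norm:
  assumes nsq: "\<And>A B. A^2 - q * w * B^2 = 0 \<Longrightarrow> B = 0"
  shows "(A, B) \<noteq> (0, 0) \<Longrightarrow> psi q w (A^2 - q * w * B^2) = 1"
proof (induction "nat (\<bar>A\<bar> + \<bar>B\<bar>)" arbitrary: A B rule: less_induct)
  case less
  define N where "N = A^2 - q * w * B^2"
  have N0: "N \<noteq> 0"
  proof
    assume "N = 0"
    then have "B = 0" using nsq unfolding N_def by blast
    then have "A = 0" using \<open>N = 0\<close> by (simp add: N_def)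
    then show False using less.prems \<open>B = 0\<close> by simp
  qed
  show ?case
  proof (cases "q dvd A")
    case False
    have "[N = A^2] (mod q)"
    proof -
      have "N - A^2 = q * (- (w * B^2))" by (simp add: N_def algebra_simps)
      then show ?thesis by (simp add: cong_iff_dvd_diff)
    qed
    moreover have "\<not> q dvd N"
    proof
      assume "q dvd N"
      then have "q dvd N + q * w * B^2" by simp
      then have "q dvd A^2" by (simp add: N_def)
      then show False using False q_prime prime_dvd_power by blast
    qed
    ultimately have "psi q w N = Legendre (A^2) q" using psi_nd Legendre_cong by simp
    then show ?thesis using Legendre_sq[OF q_prime False] unfolding N_def by simp
  next
    case True
    then obtain A1 where A1: "A = q * A1" by blast
    show ?thesis
    proof (cases "q dvd B")
      case False
      define M where "M = q * A1^2 - w * B^2"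
      have NM: "N = q * M" by (simp add: N_def M_def A1 power2_eq_square algebra_simps)
      have M0: "M \<noteq> 0" using N0 NM by auto
      have nM: "\<not> q dvd M"
      proof
        assume "q dvd M"
        then have "q dvd q * A1^2 - M" by simp
        then have "q dvd w * B^2" by (simp add: M_def)
        then have "q dvd w \<or> q dvd B^2" using q_prime prime_dvd_mult_iff by blast
        then show False using q_ndvd_w False q_prime prime_dvd_power by blast
      qed
      have "[M = - w * B^2] (mod q)"
      proof -
        have "M - (- w * B^2) = q * A1^2" by (simp add: M_def)
        then show ?thesis by (simp add: cong_iff_dvd_diff)
      qed
      then have LM: "Legendre M q = Legendre (- w * B^2) q" by (rule Legendre_cong)
      have "psi q w N = psi q w q * psi q w M" using psi_mult[of q M] M0 q_gt2 NM by simp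
      also have "\<dots> = Legendre (- w) q * Legendre (- w * B^2) q" using psi_q psi_nd[OF nM] LM by simp
      also have "\<dots> = Legendre ((- w) * (- w * B^2)) q" by (rule Legendre_mult[OF q_prime q_gt2, symmetric])
      also have "(- w) * (- w * B^2) = (w * B)^2" by (simp add: power2_eq_square)
      also have "Legendre ((w * B)^2) q = 1"
      proof -
        have "\<not> q dvd w * B" using q_ndvd_w False q_prime prime_dvd_mult_iff by blast
        then show ?thesis by (rule Legendre_sq[OF q_prime])
      qed
      finally show ?thesis by (simp add: N_def)
    next
      case True
      then obtain B1 where B1: "B = q * B1" by blast
      have NN: "N = q^2 * (A1^2 - q * w * B1^2)" by (simp add: N_def A1 B1 power2_eq_square algebra_simps)
      have ne: "(A1, B1) \<noteq> (0, 0)" using less.prems A1 B1 by auto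
      have lt: "nat (\<bar>A1\<bar> + \<bar>B1\<bar>) < nat (\<bar>A\<bar> + \<bar>B\<bar>)"
      proof -
        have "\<bar>A\<bar> = q * \<bar>A1\<bar>" "\<bar>B\<bar> = q * \<bar>B1\<bar>" using A1 B1 q_gt2 by (simp_all add: abs_mult)
        moreover have "\<bar>A1\<bar> + \<bar>B1\<bar> > 0" using ne by auto
        moreover have "(q - 1) * (\<bar>A1\<bar> + \<bar>B1\<bar>) > 0" using q_gt2 \<open>\<bar>A1\<bar> + \<bar>B1\<bar> > 0\<close> by simp
        ultimately have "\<bar>A1\<bar> + \<bar>B1\<bar> < \<bar>A\<bar> + \<bar>B\<bar>" by (simp add: algebra_simps)
        then show ?thesis by (simp add: zless_nat_conj)
      qed
      have IH: "psi q w (A1^2 - q * w * B1^2) = 1" using less.hyps[OF lt ne] .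
      have M0: "A1^2 - q * w * B1^2 \<noteq> 0" using N0 NN by auto
      have "psi q w N = psi q w (q^2) * psi q w (A1^2 - q * w * B1^2)"
        using NN psi_mult[OF _ M0, of "q^2"] q_gt2 by simp
      also have "psi q w (q^2) = psi q w q * psi q w q"
        using psi_mult[of q q] q_gt2 by (simp add: power2_eq_square)
      also have "\<dots> = 1" using psi_q Lw by auto
      finally show ?thesis using IH by (simp add: N_def)
    qed
  qed
qed

end

lemma sqf_mult_coprime:
  fixes a b :: int
  assumes "squarefree (a * b)" shows "coprime a b"
proof (rule coprimeI)
  fix c assume "c dvd a" "c dvd b"
  then have "c^2 dvd a * b" by (simp add: power2_eq_square mult_dvd_mono)
  then show "is_unit c" using assms squarefreeD by blast
qed

context qf
begin

definition Iid :: "int \<Rightarrow> complex set" where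
  "Iid t = {of_int t * y + w * z | y z. y \<in> Rg \<and> z \<in> Rg}"

lemma Iid_ideal:
  assumes t: "t > 0"
  shows "isI (Iid t)" "Iid t \<noteq> {0}"
proof -
  show "isI (Iid t)"
    unfolding is_ideal_in_def
  proof (intro conjI ballI)
    show "Iid t \<subseteq> Rg" unfolding Iid_def
      by (auto intro!: Rg_add Rg_mult Rg_of_int Rg_w)
    show "0 \<in> Iid t" unfolding Iid_def using Rg_0 by force
  next
    fix x y assume "x \<in> Iid t" "y \<in> Iid t"
    then obtain y1 z1 y2 z2 where x: "x = of_int t * y1 + w * z1" "y1 \<in> Rg" "z1 \<in> Rg"
      and y: "y = of_int t * y2 + w * z2" "y2 \<in> Rg" "z2 \<in> Rg" unfolding Iid_def by blast
    have "x + y = of_int t * (y1 + y2) + w * (z1 + z2)" using x y by (simp add: algebra_simps)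
    then show "x + y \<in> Iid t" unfolding Iid_def using x y by (blast intro: Rg_add)
    have "x - y = of_int t * (y1 - y2) + w * (z1 - z2)" using x y by (simp add: algebra_simps)
    then show "x - y \<in> Iid t" unfolding Iid_def using x y by (blast intro: Rg_diff)
  next
    fix c x assume c: "c \<in> Rg" and "x \<in> Iid t"
    then obtain y1 z1 where x: "x = of_int t * y1 + w * z1" "y1 \<in> Rg" "z1 \<in> Rg" unfolding Iid_def by blast
    have "c * x = of_int t * (c * y1) + w * (c * z1)" using x by (simp add: algebra_simps)
    then show "c * x \<in> Iid t" unfolding Iid_def using x c by (blast intro: Rg_mult)
  qed
  have "of_int t \<in> Iid t" unfolding Iid_def using Rg_1 Rg_0 by force
  moreover have "(of_int t :: complex) \<noteq> 0" using t by simp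
  ultimately show "Iid t \<noteq> {0}" by blast
qed

lemma cA_of_int_mult: "x \<in> Rg \<Longrightarrow> cA (of_int n * x) = n * cA x"
  using Rg_int_mult_coords by blast

lemma Gn_Iid:
  assumes t: "t > 0" "t dvd m"
  shows "Gn (Iid t) = t"
proof -
  obtain k where k: "m = t * k" using t(2) by blast
  have cop: "coprime t k" using sqf k sqf_mult_coprime by simp
  have d1: "t dvd Gn (Iid t)"
  proof (rule dvd_Gn)
    fix x assume "x \<in> Iid t"
    then obtain y z where x: "x = of_int t * y + w * z" "y \<in> Rg" "z \<in> Rg" unfolding Iid_def by blast
    have ty: "of_int t * y \<in> Rg" using x(2) by (simp add: Rg_mult Rg_of_int)
    have wz: "w * z \<in> Rg" using x(3) by (simp add: Rg_mult Rg_w)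
    have "nrm x = nrm (of_int t * y) + nrm (w * z) + cA (of_int t * y * cnj (w * z))"
      using nrm_add[OF ty wz] x(1) by simp
    also have "\<dots> = t^2 * nrm y - m * nrm z + t * cA (y * cnj (w * z))"
      using x(2,3) cnj_Rg[OF wz]
      by (simp add: nrm_mult Rg_of_int Rg_w nrm_w mult.assoc cA_of_int_mult Rg_mult)
    finally have "nrm x = t * (t * nrm y - k * nrm z + cA (y * cnj (w * z)))"
      by (simp add: k power2_eq_square algebra_simps)
    then show "t dvd nrm x" by simp
  qed
  have d2: "Gn (Iid t) dvd t"
  proof -
    have "of_int t \<in> Iid t" unfolding Iid_def using Rg_1 Rg_0 by force
    then have a: "Gn (Iid t) dvd t^2" using Gn_dvd by fastforce
    have "w \<in> Iid t" unfolding Iid_def using Rg_1 Rg_0 by force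
    then have "Gn (Iid t) dvd - m" using Gn_dvd nrm_w by fastforce
    then have b: "Gn (Iid t) dvd t * k" using k by simp
    have "Gn (Iid t) dvd gcd (t * t) (t * k)" using a b by (simp add: power2_eq_square)
    also have "gcd (t * t) (t * k) = t * gcd t k" using t(1) by (simp add: gcd_mult_left)
    also have "\<dots> = t" using cop by simp
    finally show ?thesis .
  qed
  show ?thesis using d1 d2 t(1) Gn_nonneg[of "Iid t"] by (simp add: zdvd_antisym_nonneg)
qed

lemma psi_invariant:
  assumes q: "prime q" "q > 2" "q dvd m" and res: "Legendre (-1) q = 1"
    and E: "(I, J) \<in> ideal_equiv Rg"
  shows "psi q (m div q) (Gn I) = psi q (m div q) (Gn J)"
proof -
  define w' where "w' = m div q"
  have mq: "m = q * w'" using q(3) by (simp add: w'_def)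
  have nq: "\<not> q dvd w'"
  proof
    assume "q dvd w'"
    then have "q^2 dvd m" using mq by (simp add: power2_eq_square mult_dvd_mono)
    then have "q dvd 1" using sqf squarefreeD by blast
    then show False using q(1) not_prime_unit by blast
  qed
  interpret P: psi_setup q w' using q nq by unfold_locales auto
  have Fnrm: "psi q w' \<bar>nrm \<alpha>\<bar> = 1" if \<alpha>: "\<alpha> \<in> Rg" "\<alpha> \<noteq> 0" for \<alpha>
  proof -
    have n0: "nrm \<alpha> \<noteq> 0" using nrm_eq_0_iff[OF \<alpha>(1)] \<alpha>(2) by simp
    have "4 * nrm \<alpha> = cA \<alpha> ^ 2 - q * w' * cB \<alpha> ^ 2" using nrm4[OF \<alpha>(1)] mq by simp
    moreover have "(cA \<alpha>, cB \<alpha>) \<noteq> (0, 0)"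
      using \<alpha> Rg_coords[OF \<alpha>(1)] by (auto simp: el_0)
    moreover have nsq: "\<And>A B. A^2 - q * w' * B^2 = 0 \<Longrightarrow> B = 0"
      using nonsq mq by (metis eq_iff_diff_eq_0)
    ultimately have "psi q w' (4 * nrm \<alpha>) = 1" using P.psi_norm[OF nsq] by simp
    moreover have "psi q w' (2^2 * nrm \<alpha>) = psi q w' (nrm \<alpha>)"
    proof (rule P.psi_sq_mult[OF n0])
      show "(2::int) \<noteq> 0" by simp
      show "\<not> q dvd 2" using q(2) by (auto dest: zdvd_imp_le)
    qed
    ultimately have p1: "psi q w' (nrm \<alpha>) = 1" by simp
    have pm1: "psi q w' (-1) = 1" using P.psi_nd[of "-1"] res q(2) by (auto dest: zdvd_imp_le)
    show ?thesis
    proof (cases "nrm \<alpha> \<ge> 0")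
      case True then show ?thesis using p1 by simp
    next
      case False
      then have "\<bar>nrm \<alpha>\<bar> = (-1) * nrm \<alpha>" by simp
      then show ?thesis using P.psi_mult[of "-1" "nrm \<alpha>"] n0 pm1 p1 by simp
    qed
  qed
  have "psi q w' (Gn I) = psi q w' (Gn J)"
  proof (rule ideal_equiv_Gn[OF _ _ _ E])
    show "\<And>a b. a \<noteq> 0 \<Longrightarrow> b \<noteq> 0 \<Longrightarrow> psi q w' (a * b) = psi q w' a * psi q w' b"
      by (rule P.psi_mult)
    show "\<And>\<alpha>. \<alpha> \<in> Rg \<Longrightarrow> \<alpha> \<noteq> 0 \<Longrightarrow> psi q w' \<bar>nrm \<alpha>\<bar> = 1" by (rule Fnrm)
    show "\<And>a. a \<noteq> 0 \<Longrightarrow> psi q w' a \<noteq> 0" using P.psi_pm by fastforce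
  qed
  then show ?thesis by (simp add: w'_def)
qed

theorem class_lower_bound:
  fixes s :: nat and qs ss :: "nat \<Rightarrow> int"
  assumes qprime: "\<And>c. c < s \<Longrightarrow> prime (qs c)"
    and q2: "\<And>c. c < s \<Longrightarrow> qs c > 2"
    and qdvd: "\<And>c. c < s \<Longrightarrow> qs c dvd m"
    and qres: "\<And>c. c < s \<Longrightarrow> Legendre (-1) (qs c) = 1"
    and spos: "\<And>c. c < s \<Longrightarrow> ss c > 0"
    and sdvd: "\<And>c. c < s \<Longrightarrow> ss c dvd m"
    and sq: "\<And>c c'. c < s \<Longrightarrow> c' < s \<Longrightarrow> \<not> qs c' dvd ss c"
    and leg: "\<And>c c'. c < s \<Longrightarrow> c' < s \<Longrightarrow> Legendre (ss c) (qs c') = (if c = c' then -1 else 1)"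
  shows "s + 1 \<le> class_number m"
proof -
  define E where "E = ideal_equiv Rg"
  define Q where "Q = nonzero_ideals Rg // E"
  define sv where "sv c = (if c < s then ss c else 1)" for c
  have sv_pos: "sv c > 0" for c using spos by (simp add: sv_def)
  have sv_dvd: "sv c dvd m" for c using sdvd by (simp add: sv_def)
  define X where "X c = E `` {Iid (sv c)}" for c
  have IidN: "Iid (sv c) \<in> nonzero_ideals Rg" for c
    using Iid_ideal[OF sv_pos] by (simp add: nonzero_ideals_def)
  have XQ: "X c \<in> Q" for c unfolding X_def Q_def using IidN by (rule quotientI)
  have psi_val: "psi (qs d) (m div qs d) (Gn (Iid (sv c))) = (if c = d then -1 else 1)"
    if d: "d < s" and c: "c \<le> s" for c d
  proof -
    have "\<not> qs d dvd sv c"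
    proof (cases "c < s")
      case True then show ?thesis using sq[OF True d] by (simp add: sv_def)
    next
      case False then show ?thesis using q2[OF d] by (auto simp: sv_def dest: zdvd_imp_le)
    qed
    moreover have "m div qs d * qs d = m" using qdvd[OF d] by simp
    ultimately have "psi (qs d) (m div qs d) (Gn (Iid (sv c))) = Legendre (sv c) (qs d)"
      using Gn_Iid[OF sv_pos sv_dvd] by (simp add: psi_def not_dvd_imp_multiplicity_0)
    also have "\<dots> = (if c = d then -1 else 1)"
    proof (cases "c < s")
      case True then show ?thesis using leg[OF True d] by (simp add: sv_def)
    next
      case False
      then have "c \<noteq> d" using d by auto
      then show ?thesis using False Legendre_one[OF qprime[OF d]] by (simp add: sv_def)
    qed
    finally show ?thesis .
  qed
  have inj: "inj_on X {0..s}"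
  proof (rule inj_onI)
    fix c c' assume c: "c \<in> {0..s}" and c': "c' \<in> {0..s}" and eq: "X c = X c'"
    show "c = c'"
    proof (rule ccontr)
      assume ne: "c \<noteq> c'"
      have rel: "(Iid (sv c), Iid (sv c')) \<in> E"
        using eq equiv_class_eq_iff[OF equiv_ideal] IidN unfolding X_def E_def by blast
      obtain d where d: "d < s" "d = c \<or> d = c'"
      proof (cases "c < s")
        case True then show ?thesis using that by blast
      next
        case False then have "c' < s" using c c' ne by auto
        then show ?thesis using that by blast
      qed
      have "psi (qs d) (m div qs d) (Gn (Iid (sv c))) = psi (qs d) (m div qs d) (Gn (Iid (sv c')))"
        using psi_invariant[OF qprime[OF d(1)] q2[OF d(1)] qdvd[OF d(1)] qres[OF d(1)]] rel
        unfolding E_def by blast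
      then show False using psi_val[OF d(1)] c c' ne d(2) by auto
    qed
  qed
  have fin: "finite Q" unfolding Q_def E_def by (rule finite_classes)
  have "card (X ` {0..s}) \<le> card Q"
    using XQ fin by (intro card_mono) auto
  moreover have "card (X ` {0..s}) = s + 1" using inj by (simp add: card_image)
  moreover have "class_number m = card Q" by (simp add: class_number_def quad_ints_eq Q_def E_def)
  ultimately show ?thesis by simp
qed

end

lemma quad_field_scale:
  fixes f M :: int
  assumes f: "f \<noteq> 0" and M: "M > 0"
  shows "quad_field (f^2 * M) = quad_field M"
proof -
  have c1: "csqrt (of_int (f^2 * M)) = complex_of_real (sqrt (real_of_int (f^2 * M)))"
  proof -
    have "(of_int (f^2 * M) :: complex) = complex_of_real (real_of_int (f^2 * M))" by simp
    then show ?thesis using M by (simp only: csqrt_of_real) (simp add: csqrt_of_real)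
  qed
  have c2: "csqrt (of_int M) = complex_of_real (sqrt (real_of_int M))"
  proof -
    have "(of_int M :: complex) = complex_of_real (real_of_int M)" by simp
    then show ?thesis using M by (simp only: csqrt_of_real)
  qed
  have c3: "sqrt (real_of_int (f^2 * M)) = real_of_int \<bar>f\<bar> * sqrt (real_of_int M)"
    by (simp add: real_sqrt_mult)
  have c: "csqrt (of_int (f^2 * M)) = of_int \<bar>f\<bar> * csqrt (of_int M)"
    unfolding c1 c2 c3 by (simp only: of_real_mult of_real_of_int_eq)
  have fa: "(of_int \<bar>f\<bar> :: complex) \<noteq> 0" using f by simp
  show ?thesis
  proof (intro subset_antisym subsetI)
    fix x assume "x \<in> quad_field (f^2 * M)"
    then obtain a b where x: "x = a + b * csqrt (of_int (f^2 * M))" "a \<in> \<rat>" "b \<in> \<rat>"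
      unfolding quad_field_def by blast
    have "x = a + (b * of_int \<bar>f\<bar>) * csqrt (of_int M)" using x(1) c by (simp add: mult.assoc)
    moreover have "b * of_int \<bar>f\<bar> \<in> \<rat>" by (intro Rats_mult Rats_of_int x(3))
    ultimately show "x \<in> quad_field M" unfolding quad_field_def using x(2) by blast
  next
    fix x assume "x \<in> quad_field M"
    then obtain a b where x: "x = a + b * csqrt (of_int M)" "a \<in> \<rat>" "b \<in> \<rat>"
      unfolding quad_field_def by blast
    have "x = a + (b / of_int \<bar>f\<bar>) * csqrt (of_int (f^2 * M))" using x(1) c fa by simp
    moreover have "b / of_int \<bar>f\<bar> \<in> \<rat>" by (intro Rats_divide Rats_of_int x(3))
    ultimately show "x \<in> quad_field (f^2 * M)" unfolding quad_field_def using x(2) by blast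
  qed
qed

lemma class_number_scale:
  fixes f M :: int
  assumes "f \<noteq> 0" "M > 0"
  shows "class_number (f^2 * M) = class_number M"
  unfolding class_number_def quad_ints_def quad_field_scale[OF assms] ..

lemma prime_large_res:
  fixes N :: int
  shows "\<exists>q. prime q \<and> q > N \<and> q > 2 \<and> Legendre (-1) q = 1"
proof -
  define n where "n = max (nat N) 2"
  define X where "X = (fact n :: nat)^2 + 1"
  have "X \<noteq> 1" by (simp add: X_def)
  then obtain p where p: "prime p" "p dvd X" using prime_factor_nat by blast
  have pn: "p > n"
  proof (rule ccontr)
    assume "\<not> p > n"
    then have "p \<le> n" by simp
    moreover have "1 \<le> p" using prime_ge_1_nat[OF p(1)] .
    ultimately have "p dvd fact n" by (intro dvd_fact)
    then have pf: "p dvd (fact n)^2" by (simp add: power2_eq_square)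
    have "p dvd (fact n)^2 + 1" using p(2) unfolding X_def .
    moreover have "p dvd (fact n)^2 + 1 \<longleftrightarrow> p dvd 1" by (rule dvd_add_right_iff[OF pf])
    ultimately have "p dvd 1" by blast
    then show False using p(1) by simp
  qed
  define q where "q = int p"
  have qp: "prime q" using p(1) by (simp add: q_def)
  have "nat N < p" using pn by (simp add: n_def)
  then have "int (nat N) < int p" by (simp only: of_nat_less_iff)
  moreover have "N \<le> int (nat N)" by simp
  ultimately have qN: "q > N" unfolding q_def by linarith
  have q2: "q > 2" using pn by (simp add: q_def n_def)
  have "q dvd (int (fact n))^2 + 1" using p(2) unfolding X_def q_def by (metis of_nat_dvd_iff of_nat_1 of_nat_add of_nat_power)
  then have c: "[(int (fact n))^2 = -1] (mod q)" by (simp add: cong_iff_dvd_diff)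
  have "QuadRes q (-1)" unfolding QuadRes_def using c by blast
  moreover have "\<not> [-1 = 0] (mod q)"
  proof
    assume "[-1 = 0] (mod q)"
    then have "q dvd 1" by (simp add: cong_iff_dvd_diff)
    then show False using q2 by (auto dest: zdvd_imp_le)
  qed
  ultimately have "Legendre (-1) q = 1" by (simp add: Legendre_def)
  then show ?thesis using qp qN q2 by blast
qed


lemma prime_int_not_dvd_fact:
  fixes q :: int
  assumes q: "prime q" "q > int k"
  shows "\<not> q dvd fact k"
proof
  assume d: "q dvd fact k"
  define p where "p = nat q"
  have qp: "q = int p" using q prime_gt_0_int by (simp add: p_def)
  have pp: "prime p" using q(1) by (simp add: qp)
  have "int p dvd int (fact k)" using d by (simp add: qp of_nat_fact)
  then have "p dvd fact k" by (simp only: of_nat_dvd_iff)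
  then have "p \<le> k" using prime_dvd_fact_iff[OF pp] by simp
  then show False using q(2) qp by simp
qed

locale qseq =
  fixes k S :: nat and qs :: "nat \<Rightarrow> int"
  assumes qs_prime: "\<And>c. prime (qs c)"
    and qs_gt: "\<And>c. qs c > max 2 (int k)"
    and qs_inj: "\<And>c c'. c \<noteq> c' \<Longrightarrow> qs c \<noteq> qs c'"
begin

lemma qs_gt2: "qs c > 2" using qs_gt[of c] by simp
lemma qs_gtk: "qs c > int k" using qs_gt[of c] by simp

lemma coprime_qs_fact: "coprime (fact k) (qs c)"
  using prime_imp_coprime[OF qs_prime prime_int_not_dvd_fact[OF qs_prime qs_gtk]] by (simp add: coprime_commute)

lemma exists_n:
  assumes K: "K > 0" "\<And>c'. c' < S \<Longrightarrow> coprime K (qs c')" and c: "c < S"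
  shows "\<exists>n. n > 0 \<and> [n = 1] (mod K) \<and> (\<forall>c'<S. Legendre n (qs c') = (if c' = c then -1 else 1))"
proof -
  obtain a0 where a0: "0 < a0" "a0 < qs c" "Legendre a0 (qs c) = -1"
    using Legendre_nonres_exists[OF qs_prime qs_gt2] by blast
  define mo where "mo i = nat (if i < S then qs i else K)" for i
  define u where "u i = nat (if i = c then a0 else 1)" for i
  have cop: "\<forall>i\<in>{..S}. \<forall>j\<in>{..S}. i \<noteq> j \<longrightarrow> coprime (mo i) (mo j)"
  proof (intro ballI impI)
    fix i j assume i: "i \<in> {..S}" and j: "j \<in> {..S}" and ij: "i \<noteq> j"
    have ci: "coprime (if i < S then qs i else K) (if j < S then qs j else K)"
    proof (cases "i < S")
      case True
      show ?thesis
      proof (cases "j < S")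
        case True
        then show ?thesis using \<open>i < S\<close> primes_coprime[OF qs_prime qs_prime qs_inj[OF ij]] by simp
      next
        case False
        then show ?thesis using \<open>i < S\<close> K(2)[OF \<open>i < S\<close>] by (simp add: coprime_commute)
      qed
    next
      case False
      then have "j < S" using i j ij by auto
      then show ?thesis using False K(2)[OF \<open>j < S\<close>] by simp
    qed
    have pos: "(if i < S then qs i else K) \<ge> 0" "(if j < S then qs j else K) \<ge> 0"
      using K(1) qs_gt2[of i] qs_gt2[of j] by auto
    have "coprime (int (mo i)) (int (mo j))" using ci pos by (simp add: mo_def)
    then show "coprime (mo i) (mo j)" by simp
  qed
  obtain x where x: "\<forall>i\<in>{..S}. [x = u i] (mod mo i)"
    using chinese_remainder_nat[OF _ cop] by blast
  define n where "n = int x"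
  have cong_i: "[n = (if i = c then a0 else 1)] (mod (if i < S then qs i else K))" if "i \<le> S" for i
  proof -
    have "[x = u i] (mod mo i)" using x that by simp
    then have "[int x = int (u i)] (mod int (mo i))" by (simp only: cong_int_iff)
    moreover have "int (u i) = (if i = c then a0 else 1)" using a0(1) by (simp add: u_def)
    moreover have "int (mo i) = (if i < S then qs i else K)" using K(1) qs_gt2[of i] by (simp add: mo_def)
    ultimately show ?thesis by (simp add: n_def)
  qed
  have L: "Legendre n (qs c') = (if c' = c then -1 else 1)" if c': "c' < S" for c'
  proof -
    have "[n = (if c' = c then a0 else 1)] (mod qs c')" using cong_i[of c'] c' by simp
    then have "Legendre n (qs c') = Legendre (if c' = c then a0 else 1) (qs c')" by (rule Legendre_cong)
    then show ?thesis using a0(3) Legendre_one[OF qs_prime] by (cases "c' = c") simp_all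
  qed
  have nK: "[n = 1] (mod K)" using cong_i[of S] c by simp
  have "n \<noteq> 0"
  proof
    assume "n = 0"
    then have "Legendre 0 (qs c) = -1" using L[OF c] by simp
    then show False by (simp add: Legendre_def)
  qed
  then have "n > 0" by (simp add: n_def)
  then show ?thesis using nK L by blast
qed

lemma seq:
  assumes "j \<le> S"
  shows "\<exists>ss. (\<forall>c<j. ss c > 0 \<and> squarefree (ss c) \<and> coprime (ss c) (fact k) \<and>
              (\<forall>c'<S. \<not> qs c' dvd ss c) \<and> (\<forall>c'<S. Legendre (ss c) (qs c') = (if c = c' then -1 else 1))) \<and>
            (\<forall>c<j. \<forall>c'<j. c \<noteq> c' \<longrightarrow> coprime (ss c) (ss c'))"
  using assms
proof (induction j)
  case 0
  show ?case by simp
next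
  case (Suc j)
  then obtain ss where ss: "\<forall>c<j. ss c > 0 \<and> squarefree (ss c) \<and> coprime (ss c) (fact k) \<and>
              (\<forall>c'<S. \<not> qs c' dvd ss c) \<and> (\<forall>c'<S. Legendre (ss c) (qs c') = (if c = c' then -1 else 1))"
    and scop: "\<forall>c<j. \<forall>c'<j. c \<noteq> c' \<longrightarrow> coprime (ss c) (ss c')" by auto
  define K :: int where "K = fact k * (\<Prod>c<j. ss c)"
  have "(\<Prod>c<j. ss c) > 0" using ss by (intro prod_pos) auto
  then have K0: "K > 0" by (simp add: K_def)
  have Kc: "coprime K (qs c')" if "c' < S" for c'
  proof -
    have "coprime (fact k) (qs c')" by (rule coprime_qs_fact)
    moreover have "coprime (\<Prod>c<j. ss c) (qs c')"
    proof (rule prod_coprime_left)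
      fix c assume "c \<in> {..<j}"
      then have "\<not> qs c' dvd ss c" using ss that by auto
      from prime_imp_coprime[OF qs_prime this] show "coprime (ss c) (qs c')"
        by (simp only: coprime_commute)
    qed
    ultimately show ?thesis by (simp add: K_def)
  qed
  have jS: "j < S" using Suc.prems by simp
  obtain n where n: "n > 0" "[n = 1] (mod K)" "\<forall>c'<S. Legendre n (qs c') = (if c' = j then -1 else 1)"
    using exists_n[OF K0 Kc jS] by blast
  define sp where "sp = squarefree_part n"
  define sq where "sq = square_part n"
  have nd: "n = sp * sq^2" unfolding sp_def sq_def by (rule squarefree_decompose)
  have sq0: "sq \<noteq> 0" using n(1) by (simp add: sq_def)
  have sp0: "sp > 0"
  proof -
    have "sq^2 > 0" using sq0 by simp
    then show ?thesis using n(1) nd by (simp add: zero_less_mult_iff)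
  qed
  have spsq: "squarefree sp" by (simp add: sp_def)
  have spd: "sp dvd n" using nd by simp
  have sqd: "sq dvd n" using nd by (simp add: power2_eq_square)
  have copn: "coprime n K"
    using cong_imp_coprime[OF cong_sym[OF n(2)]] by simp
  have copK: "coprime sp K" using coprime_divisors[OF spd dvd_refl copn] .
  have cf: "coprime sp (fact k)" using copK by (simp add: K_def)
  have cpj: "coprime sp (ss c)" if "c < j" for c
  proof -
    have "ss c dvd (\<Prod>c<j. ss c)" using that by (intro dvd_prodI) auto
    then have "ss c dvd K" unfolding K_def by (rule dvd_mult)
    then show ?thesis using coprime_divisors[OF dvd_refl _ copK] by blast
  qed
  have nq: "\<not> qs c' dvd n" if "c' < S" for c'
  proof
    assume "qs c' dvd n"
    then have "Legendre n (qs c') = 0" by (simp add: Legendre_def cong_0_iff)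
    then show False using n(3) that by (simp split: if_splits)
  qed
  have nqsp: "\<not> qs c' dvd sp" if "c' < S" for c' using nq[OF that] spd dvd_trans by blast
  have Lsp: "Legendre sp (qs c') = (if j = c' then -1 else 1)" if c': "c' < S" for c'
  proof -
    have nqsq: "\<not> qs c' dvd sq" using nq[OF c'] sqd dvd_trans by blast
    have "Legendre n (qs c') = Legendre sp (qs c') * Legendre (sq^2) (qs c')"
      unfolding nd by (rule Legendre_mult[OF qs_prime qs_gt2])
    also have "Legendre (sq^2) (qs c') = 1" by (rule Legendre_sq[OF qs_prime nqsq])
    finally show ?thesis using n(3) c' by auto
  qed
  define ss' where "ss' = ss(j := sp)"
  have P1: "\<forall>c<Suc j. ss' c > 0 \<and> squarefree (ss' c) \<and> coprime (ss' c) (fact k) \<and>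
              (\<forall>c'<S. \<not> qs c' dvd ss' c) \<and> (\<forall>c'<S. Legendre (ss' c) (qs c') = (if c = c' then -1 else 1))"
  proof (intro allI impI)
    fix c assume "c < Suc j"
    then show "ss' c > 0 \<and> squarefree (ss' c) \<and> coprime (ss' c) (fact k) \<and>
              (\<forall>c'<S. \<not> qs c' dvd ss' c) \<and> (\<forall>c'<S. Legendre (ss' c) (qs c') = (if c = c' then -1 else 1))"
    proof (cases "c = j")
      case True
      then show ?thesis using sp0 spsq cf nqsp Lsp by (simp add: ss'_def)
    next
      case False
      then have "c < j" using \<open>c < Suc j\<close> by simp
      then show ?thesis using ss False by (simp add: ss'_def)
    qed
  qed
  have P2: "\<forall>c<Suc j. \<forall>c'<Suc j. c \<noteq> c' \<longrightarrow> coprime (ss' c) (ss' c')"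
  proof (intro allI impI)
    fix c c' assume c: "c < Suc j" and c': "c' < Suc j" and ne: "c \<noteq> c'"
    show "coprime (ss' c) (ss' c')"
    proof (cases "c = j")
      case True
      then have "c' < j" using c' ne by simp
      then show ?thesis using True cpj ne by (simp add: ss'_def)
    next
      case False
      then have cj: "c < j" using c by simp
      show ?thesis
      proof (cases "c' = j")
        case True
        then show ?thesis using cpj[OF cj] False by (simp add: ss'_def coprime_commute)
      next
        case False
        then have "c' < j" using c' by simp
        then show ?thesis using scop cj ne \<open>c \<noteq> j\<close> False by (simp add: ss'_def)
      qed
    qed
  qed
  show ?case using P1 P2 by blast
qed

end

theorem mainTheorem2:
  fixes k :: nat and M :: real
  assumes "k \<ge> 1" and "M > 0"
  shows "infinite {d :: int. d > 0 \<and> squarefree d \<and>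
           (\<forall>j \<in> {1..int k}. real (class_number (j * d)) > M)}"
proof -
  define S where "S = nat \<lceil>M\<rceil> + 1"
  have SM: "real S > M" unfolding S_def using assms(2) by linarith
  have S1: "S \<ge> 1" by (simp add: S_def)
  have "\<forall>N. \<exists>q. prime q \<and> q > N \<and> q > 2 \<and> Legendre (-1) q = 1" using prime_large_res by blast
  then have "\<exists>g. \<forall>N. prime (g N) \<and> g N > N \<and> g N > 2 \<and> Legendre (-1) (g N) = 1" by (rule choice)
  then obtain g where g: "\<And>N. prime (g N)" "\<And>N. g N > N" "\<And>N. g N > 2" "\<And>N. Legendre (-1) (g N) = 1"
    by blast
  show ?thesis
    unfolding infinite_int_iff_unbounded
  proof (intro allI)
    fix B :: int
    define qs where "qs = rec_nat (g (max B (int k))) (\<lambda>_ q. g q)"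
    have qs0: "qs 0 = g (max B (int k))" by (simp add: qs_def)
    have qsS: "qs (Suc c) = g (qs c)" for c by (simp add: qs_def)
    have qs_g: "\<exists>N. qs c = g N" for c by (cases c) (auto simp: qs0 qsS)
    have qs_prime: "prime (qs c)" for c using qs_g[of c] g(1) by auto
    have qs_2: "qs c > 2" for c using qs_g[of c] g(3) by auto
    have qs_res: "Legendre (-1) (qs c) = 1" for c using qs_g[of c] g(4) by auto
    have qs_big: "qs c > max B (int k)" for c
    proof (induction c)
      case 0 then show ?case using g(2) by (simp add: qs0)
    next
      case (Suc c) then show ?case using g(2)[of "qs c"] by (simp add: qsS)
    qed
    have smono: "strict_mono qs"
      by (rule strict_mono_Suc_iff[THEN iffD2]) (auto simp: qsS g(2))
    have qs_inj: "qs c \<noteq> qs c'" if "c \<noteq> c'" for c c'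
      using smono that strict_mono_eq by blast
    interpret QS: qseq k S qs
      by unfold_locales (use qs_prime qs_2 qs_big qs_inj in auto)
    obtain ss where ss: "\<forall>c<S. ss c > 0 \<and> squarefree (ss c) \<and> coprime (ss c) (fact k) \<and>
              (\<forall>c'<S. \<not> qs c' dvd ss c) \<and> (\<forall>c'<S. Legendre (ss c) (qs c') = (if c = c' then -1 else 1))"
      and scop: "\<forall>c<S. \<forall>c'<S. c \<noteq> c' \<longrightarrow> coprime (ss c) (ss c')"
      using QS.seq[of S] by auto
    define PQ where "PQ = (\<Prod>c<S. qs c)"
    define PS where "PS = (\<Prod>c<S. ss c)"
    define d where "d = PQ * PS"
    have PQ0: "PQ > 0" unfolding PQ_def using qs_2 by (intro prod_pos) (auto intro: less_trans[of 0 2])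
    have PS0: "PS > 0" unfolding PS_def using ss by (intro prod_pos) auto
    have d0: "d > 0" using PQ0 PS0 by (simp add: d_def)
    have "qs 0 dvd PQ" unfolding PQ_def using S1 by (intro dvd_prodI) auto
    then have "qs 0 \<le> PQ" using PQ0 by (intro zdvd_imp_le)
    moreover have "PQ \<le> d" using PS0 PQ0 by (simp add: d_def)
    ultimately have dB: "d > B" using qs_big[of 0] by simp
    have d2: "d > 2" using \<open>qs 0 \<le> PQ\<close> \<open>PQ \<le> d\<close> qs_2[of 0] by simp
    have copQS: "coprime PQ PS"
      unfolding PQ_def PS_def
    proof (intro prod_coprime_left prod_coprime_right)
      fix c c' assume "c \<in> {..<S}" "c' \<in> {..<S}"
      then have "\<not> qs c dvd ss c'" using ss by auto
      then show "coprime (qs c) (ss c')" by (rule prime_imp_coprime[OF qs_prime])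
    qed
    have sqPQ: "squarefree PQ" unfolding PQ_def
      by (intro squarefree_prod_coprime primes_coprime qs_prime qs_inj squarefree_prime)
    have sqPS: "squarefree PS" unfolding PS_def
      using ss scop by (intro squarefree_prod_coprime) auto
    have sqd: "squarefree d" unfolding d_def by (rule squarefree_mult_coprime[OF copQS sqPQ sqPS])
    have copfd: "coprime (fact k) d"
    proof -
      have "coprime (fact k) PQ" unfolding PQ_def
        by (intro prod_coprime_right) (rule QS.coprime_qs_fact)
      moreover have "coprime (fact k) PS" unfolding PS_def
        using ss by (intro prod_coprime_right) (auto simp: coprime_commute)
      ultimately show ?thesis by (simp add: d_def)
    qed
    have qdvd: "qs c dvd d" if "c < S" for c
    proof -
      have "qs c dvd PQ" unfolding PQ_def using that by (intro dvd_prodI) auto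
      then show ?thesis unfolding d_def by (rule dvd_mult2)
    qed
    have sdvd: "ss c dvd d" if "c < S" for c
    proof -
      have "ss c dvd PS" unfolding PS_def using that by (intro dvd_prodI) auto
      then show ?thesis unfolding d_def by (rule dvd_mult)
    qed
    have main: "real (class_number (j * d)) > M" if j: "j \<in> {1..int k}" for j
    proof -
      have j1: "j \<ge> 1" "j \<le> int k" using j by auto
      define jp where "jp = squarefree_part j"
      define f where "f = square_part j"
      have jd: "j = jp * f^2" unfolding jp_def f_def by (rule squarefree_decompose)
      have f0: "f \<noteq> 0" using j1 by (simp add: f_def)
      have jp0: "jp > 0"
      proof (rule ccontr)
        assume "\<not> jp > 0"
        then have "jp \<le> 0" by simp
        then have "jp * f^2 \<le> 0" by (rule mult_nonpos_nonneg) simp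
        then show False using j1 jd by simp
      qed
      have sqjp: "squarefree jp" by (simp add: jp_def)
      have jfact: "j dvd fact k"
      proof -
        have "nat j dvd fact k" using j1 by (intro dvd_fact) auto
        then have "int (nat j) dvd int (fact k)" by (simp only: of_nat_dvd_iff)
        then show ?thesis using j1 by (simp add: of_nat_fact)
      qed
      have "jp dvd fact k" using jfact jd by (metis dvd_mult_left)
      then have copjd: "coprime jp d" using coprime_divisors[OF _ dvd_refl copfd] by blast
      define m where "m = jp * d"
      have m1: "m > 1"
      proof -
        have "jp - 1 \<ge> 0" using jp0 by simp
        then have "(jp - 1) * d \<ge> 0" using d0 by (intro mult_nonneg_nonneg) auto
        then have "jp * d \<ge> d" by (simp add: algebra_simps)
        then show ?thesis using d2 unfolding m_def by linarith
      qed
      have sqm: "squarefree m" unfolding m_def by (rule squarefree_mult_coprime[OF copjd sqjp sqd])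
      have cn: "class_number (j * d) = class_number m"
      proof -
        have "j * d = f^2 * m" by (simp add: jd m_def algebra_simps)
        then show ?thesis using class_number_scale[OF f0, of m] m1 by simp
      qed
      interpret Q: qf m using m1 sqm by unfold_locales
      have "S + 1 \<le> class_number m"
      proof (rule Q.class_lower_bound[of S qs ss])
        show "\<And>c. c < S \<Longrightarrow> prime (qs c)" by (rule qs_prime)
        show "\<And>c. c < S \<Longrightarrow> qs c > 2" by (rule qs_2)
        show "\<And>c. c < S \<Longrightarrow> qs c dvd m" unfolding m_def using qdvd by (simp add: dvd_mult)
        show "\<And>c. c < S \<Longrightarrow> Legendre (-1) (qs c) = 1" by (rule qs_res)
        show "\<And>c. c < S \<Longrightarrow> ss c > 0" using ss by blast
        show "\<And>c. c < S \<Longrightarrow> ss c dvd m" unfolding m_def using sdvd by (simp add: dvd_mult)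
        show "\<And>c c'. c < S \<Longrightarrow> c' < S \<Longrightarrow> \<not> qs c' dvd ss c" using ss by blast
        show "\<And>c c'. c < S \<Longrightarrow> c' < S \<Longrightarrow> Legendre (ss c) (qs c') = (if c = c' then -1 else 1)"
          using ss by blast
      qed
      then have "real S + 1 \<le> real (class_number (j * d))" using cn by simp
      then show ?thesis using SM by simp
    qed
    have "d \<in> {d :: int. d > 0 \<and> squarefree d \<and> (\<forall>j \<in> {1..int k}. real (class_number (j * d)) > M)}"
      using d0 sqd main by blast
    moreover have "B < \<bar>d\<bar>" using dB d0 by simp
    ultimately show "\<exists>n. B < \<bar>n\<bar> \<and> n \<in> {d :: int. d > 0 \<and> squarefree d \<and> (\<forall>j \<in> {1..int k}. real (class_number (j * d)) > M)}"
      by blast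
  qed
qed


end
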